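(* Let $X_V=\{(x,0):x\in\mathbb Z_s\}\cup\{(0,\tfrac1{n+1}):n\in\mathbb Z_{\ge0}\}\subseteq\mathbb Z_s\times[0,1]$, and identify $C(X_V)$ with the C$^*$-algebra of pairs $F=(f,(x_n)_{n\ge0})$ with $f\in C(\mathbb Z_s)$, $x_n\in\mathbb C$ and $\lim_{n\to\infty}x_n=f(0)$. Then the map $$T_V(F)=\sum_{n=0}^\infty (x_n-f(0))P_{(n,0)}+M_f$$ is an isomorphism of C$^*$-algebras from $C(X_V)$ onto $B_V=C^*(M_f,P_{(n,0)}:f\in C(\mathbb Z_s),n\ge0)=A_{V,\mathrm{inv}}$.
   Context: Fix an integer $s\ge2$; $\mathbb Z_s$ is the compact ring of $s$-adic integers, containing $\mathbb Z_{\ge0}$ densely. Let $\mathcal V=\{(n,x): n\in\mathbb Z_{\ge0},\ x\in\mathbb Z,\ 0\le x<s^n\}$, $H=\ell^2(\mathcal V)$ with orthonormal basis $\{E_{(n,x)}\}$, $M_fE_{(n,x)}=f(x)E_{(n,x)}$. The Hensel shift is $VE_{(n,x)}=E_{(n+1,sx)}$, $A_V=C^*(V,M_f: f\in C(\mathbb Z_s))$. $P_{(n,0)}$ denotes the orthogonal projection onto $\mathbb C E_{(n,0)}$ (equivalently $V^nP_{(0,0)}(V^* )^n$). $A_{V,\mathrm{inv}}$ is the fixed-point algebra in $A_V$ of the gauge action $\rho_\theta(a)=\mathcal U_\theta a\,\mathcal U_\theta^{-1}$, $\mathcal U_\theta E_{(n,x)}=e^{2\pi in\theta}E_{(n,x)}$.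 *)

theory Defs
  imports "HOL-Analysis.Analysis"
begin

text \<open>Z_s is represented by its digit expansions: sequences a :: nat => nat with a k < s,
  topologised as a subspace of the product topology on nat => nat (nat discrete).\<close>

definition Zs :: "nat \<Rightarrow> (nat \<Rightarrow> nat) set" where
  "Zs s = {a. \<forall>k. a k < s}"

definition sdigits :: "nat \<Rightarrow> nat \<Rightarrow> (nat \<Rightarrow> nat)" where
  "sdigits s x = (\<lambda>k. (x div s ^ k) mod s)"

text \<open>C(Z_s): continuous complex functions on Z_s (normalised to 0 off Z_s, so that
  each element of C(Z_s) has exactly one representative).\<close>
definition CZs :: "nat \<Rightarrow> ((nat \<Rightarrow> nat) \<Rightarrow> complex) set" where
  "CZs s = {f. continuous_on (Zs s) f \<and> (\<forall>a. a \<notin> Zs s \<longrightarrow> f a = 0)}"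

definition CXV :: "nat \<Rightarrow> (((nat \<Rightarrow> nat) \<Rightarrow> complex) \<times> (nat \<Rightarrow> complex)) set" where
  "CXV s = {(f, x). f \<in> CZs s \<and> x \<longlonglongrightarrow> f (sdigits s 0)}"

definition Vset :: "nat \<Rightarrow> (nat \<times> nat) set" where
  "Vset s = {(n, x). x < s ^ n}"

type_synonym mat = "nat \<times> nat \<Rightarrow> nat \<times> nat \<Rightarrow> complex"

text \<open>A matrix T (entries T v w = <E_v, T E_w>) defines a bounded operator on l^2(V)
  iff its bilinear form on finitely supported vectors is bounded.\<close>
definition mbound :: "mat \<Rightarrow> real \<Rightarrow> bool" where
  "mbound T C \<longleftrightarrow> (\<forall>A B (\<eta>::nat\<times>nat \<Rightarrow> complex) (\<xi>::nat\<times>nat \<Rightarrow> complex).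
      finite A \<longrightarrow> finite B \<longrightarrow>
      cmod (\<Sum>v\<in>A. \<Sum>w\<in>B. cnj (\<eta> v) * T v w * \<xi> w)
        \<le> C * sqrt (\<Sum>v\<in>A. (cmod (\<eta> v))\<^sup>2) * sqrt (\<Sum>w\<in>B. (cmod (\<xi> w))\<^sup>2))"

definition bop :: "nat \<Rightarrow> mat set" where
  "bop s = {T. (\<exists>C. mbound T C) \<and> (\<forall>v w. (v, w) \<notin> Vset s \<times> Vset s \<longrightarrow> T v w = 0)}"

definition opnorm :: "mat \<Rightarrow> real" where
  "opnorm T = Inf {C. C \<ge> 0 \<and> mbound T C}"

definition madd :: "mat \<Rightarrow> mat \<Rightarrow> mat" where
  "madd S T = (\<lambda>v w. S v w + T v w)"

definition mdiff :: "mat \<Rightarrow> mat \<Rightarrow> mat" where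
  "mdiff S T = (\<lambda>v w. S v w - T v w)"

definition mscale :: "complex \<Rightarrow> mat \<Rightarrow> mat" where
  "mscale c T = (\<lambda>v w. c * T v w)"

definition mzero :: mat where
  "mzero = (\<lambda>v w. 0)"

definition mmult :: "mat \<Rightarrow> mat \<Rightarrow> mat" where
  "mmult S T = (\<lambda>v w. \<Sum>\<^sub>\<infinity>u\<in>UNIV. S v u * T u w)"

definition madj :: "mat \<Rightarrow> mat" where
  "madj T = (\<lambda>v w. cnj (T w v))"

definition cstar_closed :: "nat \<Rightarrow> mat set \<Rightarrow> bool" where
  "cstar_closed s A \<longleftrightarrow> A \<subseteq> bop s \<and> mzero \<in> A
     \<and> (\<forall>S\<in>A. \<forall>T\<in>A. madd S T \<in> A \<and> mmult S T \<in> A)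
     \<and> (\<forall>c. \<forall>T\<in>A. mscale c T \<in> A)
     \<and> (\<forall>T\<in>A. madj T \<in> A)
     \<and> (\<forall>X T. (\<forall>k. X k \<in> A) \<longrightarrow> T \<in> bop s
            \<longrightarrow> (\<lambda>k. opnorm (mdiff (X k) T)) \<longlonglongrightarrow> 0 \<longrightarrow> T \<in> A)"

definition cstar_gen :: "nat \<Rightarrow> mat set \<Rightarrow> mat set" where
  "cstar_gen s G = \<Inter>{A. cstar_closed s A \<and> G \<subseteq> A}"

definition Mop :: "nat \<Rightarrow> ((nat \<Rightarrow> nat) \<Rightarrow> complex) \<Rightarrow> mat" where
  "Mop s f = (\<lambda>v w. if v = w \<and> v \<in> Vset s then f (sdigits s (snd v)) else 0)"

definition Vshift :: "nat \<Rightarrow> mat" where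
  "Vshift s = (\<lambda>v w. if w \<in> Vset s \<and> v = (Suc (fst w), s * snd w) then 1 else 0)"

definition Pn :: "nat \<Rightarrow> nat \<Rightarrow> mat" where
  "Pn s n = (\<lambda>v w. if v = (n, 0) \<and> w = (n, 0) then 1 else 0)"

definition Ugauge :: "nat \<Rightarrow> real \<Rightarrow> mat" where
  "Ugauge s \<theta> = (\<lambda>v w. if v = w \<and> v \<in> Vset s
                        then exp (2 * pi * \<i> * of_nat (fst v) * of_real \<theta>) else 0)"

text \<open>rho_theta(a) = U_theta a U_theta^{-1}, with U_theta^{-1} = U_{-theta}.\<close>
definition rho :: "nat \<Rightarrow> real \<Rightarrow> mat \<Rightarrow> mat" where
  "rho s \<theta> a = mmult (mmult (Ugauge s \<theta>) a) (Ugauge s (- \<theta>))"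

definition AV :: "nat \<Rightarrow> mat set" where
  "AV s = cstar_gen s ({Vshift s} \<union> Mop s ` CZs s)"

definition AVinv :: "nat \<Rightarrow> mat set" where
  "AVinv s = {a \<in> AV s. \<forall>\<theta>. rho s \<theta> a = a}"

definition BV :: "nat \<Rightarrow> mat set" where
  "BV s = cstar_gen s (Mop s ` CZs s \<union> range (Pn s))"

text \<open>T_V(F) = sum_n (x_n - f(0)) P_(n,0) + M_f  (series taken entrywise; its
  operator-norm convergence is part of the theorem).\<close>
definition TV :: "nat \<Rightarrow> ((nat \<Rightarrow> nat) \<Rightarrow> complex) \<times> (nat \<Rightarrow> complex) \<Rightarrow> mat" where
  "TV s F = (case F of (f, x) \<Rightarrow>
     madd (\<lambda>v w. \<Sum>n. mscale (x n - f (sdigits s 0)) (Pn s n) v w) (Mop s f))"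

end

theory Submission
  imports Defs
begin

lemma CS_real:
  fixes a b :: "'a \<Rightarrow> real"
  shows "(\<Sum>i\<in>I. a i * b i) \<le> sqrt (\<Sum>i\<in>I. (a i)\<^sup>2) * sqrt (\<Sum>i\<in>I. (b i)\<^sup>2)"
proof -
  have "(\<Sum>i\<in>I. a i * b i)\<^sup>2 \<le> (\<Sum>i\<in>I. (a i)\<^sup>2) * (\<Sum>i\<in>I. (b i)\<^sup>2)"
    by (rule Cauchy_Schwarz_ineq_sum)
  then have "sqrt ((\<Sum>i\<in>I. a i * b i)\<^sup>2) \<le> sqrt ((\<Sum>i\<in>I. (a i)\<^sup>2) * (\<Sum>i\<in>I. (b i)\<^sup>2))"
    using real_sqrt_le_mono by blast
  then show ?thesis by (simp add: real_sqrt_mult)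
qed

lemma mbound_mono: "mbound T C \<Longrightarrow> C \<le> D \<Longrightarrow> mbound T D"
  unfolding mbound_def
  by (meson order_trans mult_right_mono real_sqrt_ge_zero sum_nonneg zero_le_power2 mult_nonneg_nonneg)

lemma mbound_abs: "mbound T C \<Longrightarrow> mbound T \<bar>C\<bar>"
  using mbound_mono by fastforce

lemma mbound_entry:
  assumes "mbound T C" shows "cmod (T v w) \<le> C"
proof -
  have "cmod (\<Sum>v'\<in>{v}. \<Sum>w'\<in>{w}. cnj (1::complex) * T v' w' * 1)
        \<le> C * sqrt (\<Sum>v'\<in>{v}. (cmod (1::complex))\<^sup>2) * sqrt (\<Sum>w'\<in>{w}. (cmod (1::complex))\<^sup>2)"
    using assms unfolding mbound_def by (erule_tac x="{v}" in allE, erule_tac x="{w}" in allE,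
       erule_tac x="\<lambda>_. 1" in allE, erule_tac x="\<lambda>_. 1" in allE) simp
  then show ?thesis by simp
qed

lemma bop_ex: "T \<in> bop s \<Longrightarrow> \<exists>C\<ge>0. mbound T C"
proof -
  assume "T \<in> bop s"
  then obtain C where "mbound T C" unfolding bop_def by blast
  then show ?thesis using mbound_abs abs_ge_zero by blast
qed

lemma opnorm_le: "mbound T C \<Longrightarrow> 0 \<le> C \<Longrightarrow> opnorm T \<le> C"
  unfolding opnorm_def by (rule cInf_lower) (auto intro: bdd_belowI[where m=0])

lemma opnorm_nonneg: "T \<in> bop s \<Longrightarrow> 0 \<le> opnorm T"
  unfolding opnorm_def using bop_ex by (intro cInf_greatest) auto

lemma opnorm_mbound:
  assumes "T \<in> bop s" shows "mbound T (opnorm T)"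
  unfolding mbound_def
proof (intro allI impI)
  fix A B :: "(nat\<times>nat) set" and \<eta> \<xi> :: "nat\<times>nat \<Rightarrow> complex"
  assume fin: "finite A" "finite B"
  define L where "L = cmod (\<Sum>v\<in>A. \<Sum>w\<in>B. cnj (\<eta> v) * T v w * \<xi> w)"
  define K where "K = sqrt (\<Sum>v\<in>A. (cmod (\<eta> v))\<^sup>2) * sqrt (\<Sum>w\<in>B. (cmod (\<xi> w))\<^sup>2)"
  have K0: "K \<ge> 0" unfolding K_def by (simp add: sum_nonneg)
  have LC: "L \<le> C * K" if "C \<ge> 0" "mbound T C" for C
    using that fin unfolding mbound_def L_def K_def by (simp add: mult.assoc)
  obtain C0 where C0: "C0 \<ge> 0" "mbound T C0" using bop_ex assms by blast
  have "L \<le> opnorm T * K"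
  proof (cases "K = 0")
    case True then show ?thesis using LC[OF C0] by simp
  next
    case False
    then have Kp: "K > 0" using K0 by simp
    have "L / K \<le> opnorm T" unfolding opnorm_def
      using C0 LC Kp by (intro cInf_greatest) (auto simp: divide_le_eq mult.commute)
    then show ?thesis using Kp by (simp add: divide_le_eq)
  qed
  then show "cmod (\<Sum>v\<in>A. \<Sum>w\<in>B. cnj (\<eta> v) * T v w * \<xi> w) \<le> opnorm T * sqrt (\<Sum>v\<in>A. (cmod (\<eta> v))\<^sup>2) * sqrt (\<Sum>w\<in>B. (cmod (\<xi> w))\<^sup>2)"
    unfolding L_def K_def by (simp add: mult.assoc)
qed

lemma opnorm_entry: "T \<in> bop s \<Longrightarrow> cmod (T v w) \<le> opnorm T"
  using opnorm_mbound mbound_entry by blast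

lemma mbound_add:
  assumes "mbound S C" "mbound T D" shows "mbound (madd S T) (C + D)"
  unfolding mbound_def madd_def
proof (intro allI impI)
  fix A B :: "(nat\<times>nat) set" and \<eta> \<xi> :: "nat\<times>nat \<Rightarrow> complex"
  assume fin: "finite A" "finite B"
  let ?a = "sqrt (\<Sum>v\<in>A. (cmod (\<eta> v))\<^sup>2)" and ?b = "sqrt (\<Sum>w\<in>B. (cmod (\<xi> w))\<^sup>2)"
  have "(\<Sum>v\<in>A. \<Sum>w\<in>B. cnj (\<eta> v) * (S v w + T v w) * \<xi> w)
     = (\<Sum>v\<in>A. \<Sum>w\<in>B. cnj (\<eta> v) * S v w * \<xi> w) + (\<Sum>v\<in>A. \<Sum>w\<in>B. cnj (\<eta> v) * T v w * \<xi> w)"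
    by (simp add: algebra_simps sum.distrib)
  also have "cmod \<dots> \<le> C * ?a * ?b + D * ?a * ?b"
    using assms fin unfolding mbound_def by (meson add_mono norm_triangle_le)
  finally show "cmod (\<Sum>v\<in>A. \<Sum>w\<in>B. cnj (\<eta> v) * (S v w + T v w) * \<xi> w) \<le> (C + D) * ?a * ?b"
    by (simp add: algebra_simps)
qed

lemma mbound_scale:
  assumes "mbound T C" shows "mbound (mscale c T) (cmod c * C)"
  unfolding mbound_def mscale_def
proof (intro allI impI)
  fix A B :: "(nat\<times>nat) set" and \<eta> \<xi> :: "nat\<times>nat \<Rightarrow> complex"
  assume fin: "finite A" "finite B"
  have "(\<Sum>v\<in>A. \<Sum>w\<in>B. cnj (\<eta> v) * (c * T v w) * \<xi> w) = c * (\<Sum>v\<in>A. \<Sum>w\<in>B. cnj (\<eta> v) * T v w * \<xi> w)"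
    by (simp add: sum_distrib_left algebra_simps)
  then show "cmod (\<Sum>v\<in>A. \<Sum>w\<in>B. cnj (\<eta> v) * (c * T v w) * \<xi> w) \<le> cmod c * C * sqrt (\<Sum>v\<in>A. (cmod (\<eta> v))\<^sup>2) * sqrt (\<Sum>w\<in>B. (cmod (\<xi> w))\<^sup>2)"
    using assms fin unfolding mbound_def by (simp add: norm_mult mult.assoc mult_left_mono)
qed

lemma mbound_adj:
  assumes "mbound T C" shows "mbound (madj T) C"
  unfolding mbound_def madj_def
proof (intro allI impI)
  fix A B :: "(nat\<times>nat) set" and \<eta> \<xi> :: "nat\<times>nat \<Rightarrow> complex"
  assume fin: "finite A" "finite B"
  define Z where "Z = (\<Sum>w\<in>B. \<Sum>v\<in>A. cnj (\<xi> w) * T w v * \<eta> v)"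
  have Zb: "cmod Z \<le> C * sqrt (\<Sum>w\<in>B. (cmod (\<xi> w))\<^sup>2) * sqrt (\<Sum>v\<in>A. (cmod (\<eta> v))\<^sup>2)"
    using assms fin unfolding mbound_def Z_def by blast
  have "(\<Sum>v\<in>A. \<Sum>w\<in>B. cnj (\<eta> v) * cnj (T w v) * \<xi> w) = cnj Z"
    unfolding Z_def by (subst sum.swap) (simp add: mult.commute mult.left_commute)
  then show "cmod (\<Sum>v\<in>A. \<Sum>w\<in>B. cnj (\<eta> v) * cnj (T w v) * \<xi> w) \<le> C * sqrt (\<Sum>v\<in>A. (cmod (\<eta> v))\<^sup>2) * sqrt (\<Sum>w\<in>B. (cmod (\<xi> w))\<^sup>2)"
    using Zb by (simp add: mult.commute mult.left_commute)
qed

lemma mbound_zero: "mbound mzero 0"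
  unfolding mbound_def mzero_def by simp

lemma summable_on_finsum:
  fixes f :: "'i \<Rightarrow> 'a \<Rightarrow> complex"
  assumes "finite I" "\<And>i. i \<in> I \<Longrightarrow> f i summable_on A"
  shows "(\<lambda>x. \<Sum>i\<in>I. f i x) summable_on A \<and> infsum (\<lambda>x. \<Sum>i\<in>I. f i x) A = (\<Sum>i\<in>I. infsum (f i) A)"
  using assms
proof (induction I rule: finite_induct)
  case empty then show ?case by simp
next
  case (insert j I)
  then have IH: "(\<lambda>x. \<Sum>i\<in>I. f i x) summable_on A" "infsum (\<lambda>x. \<Sum>i\<in>I. f i x) A = (\<Sum>i\<in>I. infsum (f i) A)"
    by auto
  have fj: "f j summable_on A" using insert by auto
  show ?case using insert IH fj
    by (simp add: summable_on_add infsum_add)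
qed

lemma l2_pair:
  fixes f g :: "'a \<Rightarrow> complex"
  assumes f: "\<And>F. finite F \<Longrightarrow> (\<Sum>u\<in>F. (cmod (f u))\<^sup>2) \<le> a\<^sup>2"
    and g: "\<And>F. finite F \<Longrightarrow> (\<Sum>u\<in>F. (cmod (g u))\<^sup>2) \<le> b\<^sup>2"
    and a: "a \<ge> 0" and b: "b \<ge> 0"
  shows "(\<lambda>u. cmod (f u * g u)) summable_on UNIV" "cmod (infsum (\<lambda>u. f u * g u) UNIV) \<le> a * b"
proof -
  have fs: "(\<Sum>u\<in>F. cmod (f u * g u)) \<le> a * b" if "finite F" for F
  proof -
    have "(\<Sum>u\<in>F. cmod (f u * g u)) = (\<Sum>u\<in>F. cmod (f u) * cmod (g u))" by (simp add: norm_mult)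
    also have "\<dots> \<le> sqrt (\<Sum>u\<in>F. (cmod (f u))\<^sup>2) * sqrt (\<Sum>u\<in>F. (cmod (g u))\<^sup>2)" by (rule CS_real)
    also have "\<dots> \<le> sqrt (a\<^sup>2) * sqrt (b\<^sup>2)"
      using f[OF that] g[OF that] by (intro mult_mono real_sqrt_le_mono) (auto simp: sum_nonneg)
    finally show ?thesis using a b by simp
  qed
  show abs: "(\<lambda>u. cmod (f u * g u)) summable_on UNIV"
    unfolding abs_summable_iff_bdd_above using fs by (intro bdd_aboveI2) auto
  have "cmod (infsum (\<lambda>u. f u * g u) UNIV) \<le> infsum (\<lambda>u. cmod (f u * g u)) UNIV"
    by (rule norm_infsum_bound[OF abs])
  also have "\<dots> \<le> a * b" using abs fs by (intro infsum_le_finite_sums) auto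
  finally show "cmod (infsum (\<lambda>u. f u * g u) UNIV) \<le> a * b" .
qed

lemma mbound_l2:
  fixes \<xi> :: "nat\<times>nat \<Rightarrow> complex"
  assumes T: "mbound T C" and C: "C \<ge> 0" and fin: "finite U" "finite B"
  shows "(\<Sum>u\<in>U. (cmod (\<Sum>w\<in>B. T u w * \<xi> w))\<^sup>2) \<le> C\<^sup>2 * (\<Sum>w\<in>B. (cmod (\<xi> w))\<^sup>2)"
proof -
  define y where "y u = (\<Sum>w\<in>B. T u w * \<xi> w)" for u
  define Y where "Y = (\<Sum>u\<in>U. (cmod (y u))\<^sup>2)"
  define X where "X = (\<Sum>w\<in>B. (cmod (\<xi> w))\<^sup>2)"
  have Y0: "Y \<ge> 0" and X0: "X \<ge> 0" unfolding Y_def X_def by (auto intro: sum_nonneg)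
  have "(\<Sum>u\<in>U. \<Sum>w\<in>B. cnj (y u) * T u w * \<xi> w) = (\<Sum>u\<in>U. cnj (y u) * y u)"
    unfolding y_def by (simp add: sum_distrib_left mult.assoc)
  also have "\<dots> = (\<Sum>u\<in>U. of_real ((cmod (y u))\<^sup>2))"
    by (rule sum.cong[OF refl]) (metis complex_norm_square mult.commute)
  also have "\<dots> = of_real Y" unfolding Y_def by (rule of_real_sum[symmetric])
  finally have eq: "(\<Sum>u\<in>U. \<Sum>w\<in>B. cnj (y u) * T u w * \<xi> w) = of_real Y" .
  have "cmod (\<Sum>u\<in>U. \<Sum>w\<in>B. cnj (y u) * T u w * \<xi> w) \<le> C * sqrt Y * sqrt X"
    using T fin unfolding mbound_def Y_def X_def by blast
  then have YY: "Y \<le> C * sqrt Y * sqrt X" using eq Y0 by simp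
  show ?thesis
  proof (cases "Y = 0")
    case True then show ?thesis using X0 C unfolding Y_def[symmetric] X_def[symmetric] y_def[symmetric] by simp
  next
    case False
    then have "sqrt Y > 0" using Y0 by simp
    moreover have "sqrt Y * sqrt Y \<le> (C * sqrt X) * sqrt Y"
    proof -
      have "sqrt Y * sqrt Y = Y" using Y0 by simp
      then show ?thesis using YY by (simp add: mult_ac)
    qed
    ultimately have "sqrt Y \<le> C * sqrt X" using mult_right_le_imp_le by blast
    then have "(sqrt Y)\<^sup>2 \<le> (C * sqrt X)\<^sup>2" using Y0 by (intro power_mono) auto
    then have "Y \<le> C\<^sup>2 * X" using Y0 X0 by (simp add: power_mult_distrib)
    then show ?thesis unfolding Y_def X_def y_def .
  qed
qed

lemma mbound_col:
  assumes "mbound T C" "C \<ge> 0" "finite U"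
  shows "(\<Sum>u\<in>U. (cmod (T u w))\<^sup>2) \<le> C\<^sup>2"
  using mbound_l2[OF assms, of "{w}" "\<lambda>_. 1"] by simp

lemma mbound_row:
  assumes "mbound S C" "C \<ge> 0" "finite U"
  shows "(\<Sum>u\<in>U. (cmod (S v u))\<^sup>2) \<le> C\<^sup>2"
  using mbound_col[OF mbound_adj[OF assms(1)] assms(2,3), of v] by (simp add: madj_def)

lemma mmult_abs_summable:
  assumes "mbound S C" "mbound T D" "C \<ge> 0" "D \<ge> 0"
  shows "(\<lambda>u. cmod (S v u * T u w)) summable_on UNIV"
  using l2_pair(1)[of "\<lambda>u. S v u" C "\<lambda>u. T u w" D] mbound_row mbound_col assms by blast

lemma mmult_summable:
  assumes "mbound S C" "mbound T D" "C \<ge> 0" "D \<ge> 0"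
  shows "(\<lambda>u. S v u * T u w) summable_on UNIV"
  by (rule abs_summable_summable[OF mmult_abs_summable[OF assms]])

lemma bop_summable: "S \<in> bop s \<Longrightarrow> T \<in> bop s \<Longrightarrow> (\<lambda>u. S v u * T u w) summable_on UNIV"
  using bop_ex mmult_summable by metis

lemma mbound_mult:
  assumes S: "mbound S C" and T: "mbound T D" and C: "C \<ge> 0" and D: "D \<ge> 0"
  shows "mbound (mmult S T) (C * D)"
  unfolding mbound_def
proof (intro allI impI)
  fix A B :: "(nat\<times>nat) set" and \<eta> \<xi> :: "nat\<times>nat \<Rightarrow> complex"
  assume fin: "finite A" "finite B"
  define a where "a = sqrt (\<Sum>v\<in>A. (cmod (\<eta> v))\<^sup>2)"
  define b where "b = sqrt (\<Sum>w\<in>B. (cmod (\<xi> w))\<^sup>2)"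
  have a0: "a \<ge> 0" and b0: "b \<ge> 0" unfolding a_def b_def by (auto intro: sum_nonneg)
  define \<alpha> where "\<alpha> u = (\<Sum>v\<in>A. cnj (\<eta> v) * S v u)" for u
  define \<beta> where "\<beta> u = (\<Sum>w\<in>B. T u w * \<xi> w)" for u
  have sm: "(\<lambda>u. S v u * T u w) summable_on UNIV" for v w using mmult_summable[OF S T C D] .
  define h where "h v w u = cnj (\<eta> v) * (S v u * T u w) * \<xi> w" for v w u
  have smh: "(\<lambda>u. h v w u) summable_on UNIV" for v w
    unfolding h_def by (intro summable_on_cmult_left summable_on_cmult_right sm)
  have smh2: "(\<lambda>u. \<Sum>w\<in>B. h v w u) summable_on UNIV" for v
    using summable_on_finsum[OF fin(2), of "\<lambda>w u. h v w u"] smh by blast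
  have "(\<Sum>v\<in>A. \<Sum>w\<in>B. cnj (\<eta> v) * mmult S T v w * \<xi> w)
      = (\<Sum>v\<in>A. \<Sum>w\<in>B. infsum (\<lambda>u. h v w u) UNIV)"
    unfolding mmult_def h_def using sm by (simp add: infsum_cmult_left infsum_cmult_right summable_on_cmult_right)
  also have "\<dots> = (\<Sum>v\<in>A. infsum (\<lambda>u. \<Sum>w\<in>B. h v w u) UNIV)"
    by (rule sum.cong[OF refl]) (use summable_on_finsum[OF fin(2)] smh in metis)
  also have "\<dots> = infsum (\<lambda>u. \<Sum>v\<in>A. \<Sum>w\<in>B. h v w u) UNIV"
    using summable_on_finsum[OF fin(1), of "\<lambda>v u. \<Sum>w\<in>B. h v w u"] smh2 by metis
  also have "\<dots> = infsum (\<lambda>u. \<Sum>v\<in>A. \<Sum>w\<in>B. cnj (\<eta> v) * (S v u * T u w) * \<xi> w) UNIV"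
    unfolding h_def ..
  also have "\<dots> = infsum (\<lambda>u. \<alpha> u * \<beta> u) UNIV"
    unfolding \<alpha>_def \<beta>_def by (simp add: sum_distrib_left sum_distrib_right mult_ac)
  finally have eq: "(\<Sum>v\<in>A. \<Sum>w\<in>B. cnj (\<eta> v) * mmult S T v w * \<xi> w) = infsum (\<lambda>u. \<alpha> u * \<beta> u) UNIV" .
  have al: "(\<Sum>u\<in>F. (cmod (\<alpha> u))\<^sup>2) \<le> (C * a)\<^sup>2" if "finite F" for F
  proof -
    have "(\<Sum>u\<in>F. (cmod (\<alpha> u))\<^sup>2) = (\<Sum>u\<in>F. (cmod (\<Sum>v\<in>A. madj S u v * \<eta> v))\<^sup>2)"
    proof (rule sum.cong)
      fix u
      have "\<alpha> u = cnj (\<Sum>v\<in>A. madj S u v * \<eta> v)" unfolding \<alpha>_def madj_def by (simp add: mult.commute)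
      then have "cmod (\<alpha> u) = cmod (\<Sum>v\<in>A. madj S u v * \<eta> v)" by (simp only: complex_mod_cnj)
      then show "(cmod (\<alpha> u))\<^sup>2 = (cmod (\<Sum>v\<in>A. madj S u v * \<eta> v))\<^sup>2" by simp
    qed simp
    also have "\<dots> \<le> C\<^sup>2 * a\<^sup>2" using mbound_l2[OF mbound_adj[OF S] C that fin(1)] a0
      unfolding a_def by (simp add: sum_nonneg)
    finally show ?thesis by (simp add: power_mult_distrib)
  qed
  have be: "(\<Sum>u\<in>F. (cmod (\<beta> u))\<^sup>2) \<le> (D * b)\<^sup>2" if "finite F" for F
    using mbound_l2[OF T D that fin(2), of \<xi>] b0 unfolding \<beta>_def b_def by (simp add: power_mult_distrib sum_nonneg)
  have "cmod (infsum (\<lambda>u. \<alpha> u * \<beta> u) UNIV) \<le> (C * a) * (D * b)"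
    by (rule l2_pair(2)) (use al be C D a0 b0 in auto)
  then show "cmod (\<Sum>v\<in>A. \<Sum>w\<in>B. cnj (\<eta> v) * mmult S T v w * \<xi> w) \<le> C * D * sqrt (\<Sum>v\<in>A. (cmod (\<eta> v))\<^sup>2) * sqrt (\<Sum>w\<in>B. (cmod (\<xi> w))\<^sup>2)"
    unfolding eq a_def b_def by (simp add: mult_ac)
qed

lemma mbound_bopI: "mbound T C \<Longrightarrow> (\<And>v w. (v, w) \<notin> Vset s \<times> Vset s \<Longrightarrow> T v w = 0) \<Longrightarrow> T \<in> bop s"
  unfolding bop_def by blast

lemma bop_supp: "T \<in> bop s \<Longrightarrow> (v, w) \<notin> Vset s \<times> Vset s \<Longrightarrow> T v w = 0"
  unfolding bop_def by blast

lemma bop_supp1: "T \<in> bop s \<Longrightarrow> v \<notin> Vset s \<Longrightarrow> T v w = 0"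
  unfolding bop_def by blast

lemma bop_supp2: "T \<in> bop s \<Longrightarrow> w \<notin> Vset s \<Longrightarrow> T v w = 0"
  unfolding bop_def by blast

lemma mbound_bopI': "mbound T C \<Longrightarrow> (\<And>v w. v \<notin> Vset s \<Longrightarrow> T v w = 0)
   \<Longrightarrow> (\<And>v w. w \<notin> Vset s \<Longrightarrow> T v w = 0) \<Longrightarrow> T \<in> bop s"
  unfolding bop_def by blast

lemma bop_zero: "mzero \<in> bop s"
  using mbound_zero by (auto intro!: mbound_bopI' simp: mzero_def)

lemma bop_add: "S \<in> bop s \<Longrightarrow> T \<in> bop s \<Longrightarrow> madd S T \<in> bop s"
proof -
  assume S: "S \<in> bop s" and T: "T \<in> bop s"
  obtain C D where "mbound S C" "mbound T D" using S T bop_ex by metis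
  then show ?thesis using S T
    by (intro mbound_bopI'[OF mbound_add]) (simp_all add: madd_def bop_supp1 bop_supp2)
qed

lemma bop_scale: "T \<in> bop s \<Longrightarrow> mscale c T \<in> bop s"
proof -
  assume T: "T \<in> bop s"
  obtain C where "mbound T C" using T bop_ex by metis
  then show ?thesis using T
    by (intro mbound_bopI'[OF mbound_scale]) (simp_all add: mscale_def bop_supp1 bop_supp2)
qed

lemma bop_adj: "T \<in> bop s \<Longrightarrow> madj T \<in> bop s"
proof -
  assume T: "T \<in> bop s"
  then obtain C where "mbound T C" using bop_ex by blast
  then show ?thesis using T
    by (intro mbound_bopI'[OF mbound_adj]) (simp_all add: madj_def bop_supp1 bop_supp2)
qed

lemma mdiff_eq: "mdiff S T = madd S (mscale (-1) T)"
  by (simp add: mdiff_def madd_def mscale_def)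

lemma bop_diff: "S \<in> bop s \<Longrightarrow> T \<in> bop s \<Longrightarrow> mdiff S T \<in> bop s"
  unfolding mdiff_eq by (intro bop_add bop_scale)

lemma bop_mult: "S \<in> bop s \<Longrightarrow> T \<in> bop s \<Longrightarrow> mmult S T \<in> bop s"
proof -
  assume S: "S \<in> bop s" and T: "T \<in> bop s"
  obtain C D where CD: "C \<ge> 0" "D \<ge> 0" "mbound S C" "mbound T D" using S T bop_ex by metis
  show ?thesis
    by (rule mbound_bopI'[OF mbound_mult[OF CD(3,4,1,2)]])
      (simp_all add: mmult_def bop_supp1[OF S] bop_supp2[OF T])
qed

lemma opnorm_zero: "opnorm mzero = 0"
  using opnorm_le[OF mbound_zero] opnorm_nonneg[OF bop_zero] by (meson order_antisym order_refl)

lemma opnorm_add: "S \<in> bop s \<Longrightarrow> T \<in> bop s \<Longrightarrow> opnorm (madd S T) \<le> opnorm S + opnorm T"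
  by (meson add_nonneg_nonneg mbound_add opnorm_le opnorm_mbound opnorm_nonneg)

lemma opnorm_scale: "T \<in> bop s \<Longrightarrow> opnorm (mscale c T) \<le> cmod c * opnorm T"
  by (meson mbound_scale mult_nonneg_nonneg norm_ge_zero opnorm_le opnorm_mbound opnorm_nonneg)

lemma opnorm_adj: "T \<in> bop s \<Longrightarrow> opnorm (madj T) \<le> opnorm T"
  by (meson mbound_adj opnorm_le opnorm_mbound opnorm_nonneg)

lemma opnorm_mult: "S \<in> bop s \<Longrightarrow> T \<in> bop s \<Longrightarrow> opnorm (mmult S T) \<le> opnorm S * opnorm T"
  by (meson mbound_mult mult_nonneg_nonneg opnorm_le opnorm_mbound opnorm_nonneg)

lemma opnorm_diff_sym: "S \<in> bop s \<Longrightarrow> T \<in> bop s \<Longrightarrow> opnorm (mdiff S T) = opnorm (mdiff T S)"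
proof -
  have a: "opnorm (mdiff S T) \<le> opnorm (mdiff T S)" if "S \<in> bop s" "T \<in> bop s" for S T
  proof -
    have "mdiff S T = mscale (-1) (mdiff T S)" by (simp add: mdiff_def mscale_def)
    then show ?thesis using opnorm_scale[OF bop_diff[OF that(2,1)], of "-1"] by simp
  qed
  assume "S \<in> bop s" "T \<in> bop s"
  then show ?thesis using a by (meson order_antisym)
qed

lemma opnorm_tri: "R \<in> bop s \<Longrightarrow> S \<in> bop s \<Longrightarrow> T \<in> bop s \<Longrightarrow>
   opnorm (mdiff R T) \<le> opnorm (mdiff R S) + opnorm (mdiff S T)"
proof -
  assume a: "R \<in> bop s" "S \<in> bop s" "T \<in> bop s"
  have "mdiff R T = madd (mdiff R S) (mdiff S T)" by (simp add: mdiff_def madd_def)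
  then show ?thesis using opnorm_add[OF bop_diff[OF a(1,2)] bop_diff[OF a(2,3)]] by simp
qed

lemma mbound_graph:
  fixes \<pi> :: "nat\<times>nat \<Rightarrow> nat\<times>nat"
  assumes supp: "\<And>v w. T v w \<noteq> 0 \<Longrightarrow> w = \<pi> v"
    and inj: "\<And>v v'. T v (\<pi> v) \<noteq> 0 \<Longrightarrow> T v' (\<pi> v') \<noteq> 0 \<Longrightarrow> \<pi> v = \<pi> v' \<Longrightarrow> v = v'"
    and bd: "\<And>v w. cmod (T v w) \<le> C" and C: "C \<ge> 0"
  shows "mbound T C"
  unfolding mbound_def
proof (intro allI impI)
  fix A B :: "(nat\<times>nat) set" and \<eta> \<xi> :: "nat\<times>nat \<Rightarrow> complex"
  assume fin: "finite A" "finite B"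
  define A' where "A' = {v \<in> A. \<pi> v \<in> B \<and> T v (\<pi> v) \<noteq> 0}"
  have finA': "finite A'" using fin unfolding A'_def by simp
  have inner: "(\<Sum>w\<in>B. cnj (\<eta> v) * T v w * \<xi> w) = (if \<pi> v \<in> B \<and> T v (\<pi> v) \<noteq> 0 then cnj (\<eta> v) * T v (\<pi> v) * \<xi> (\<pi> v) else 0)" for v
  proof -
    have "(\<Sum>w\<in>B. cnj (\<eta> v) * T v w * \<xi> w) = (\<Sum>w\<in>B. if w = \<pi> v then cnj (\<eta> v) * T v (\<pi> v) * \<xi> (\<pi> v) else 0)"
      by (rule sum.cong[OF refl]) (metis mult_zero_left mult_zero_right supp)
    also have "\<dots> = (if \<pi> v \<in> B then cnj (\<eta> v) * T v (\<pi> v) * \<xi> (\<pi> v) else 0)"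
      using fin(2) by (simp add: sum.delta')
    finally show ?thesis by auto
  qed
  have "(\<Sum>v\<in>A. \<Sum>w\<in>B. cnj (\<eta> v) * T v w * \<xi> w) = (\<Sum>v\<in>A'. cnj (\<eta> v) * T v (\<pi> v) * \<xi> (\<pi> v))"
    unfolding inner A'_def using fin(1) by (simp add: sum.inter_filter)
  then have "cmod (\<Sum>v\<in>A. \<Sum>w\<in>B. cnj (\<eta> v) * T v w * \<xi> w) \<le> (\<Sum>v\<in>A'. cmod (\<eta> v) * C * cmod (\<xi> (\<pi> v)))"
    using C by (auto intro!: order_trans[OF norm_sum] sum_mono simp: norm_mult intro!: mult_mono bd)
  also have "\<dots> = C * (\<Sum>v\<in>A'. cmod (\<eta> v) * cmod (\<xi> (\<pi> v)))"
    by (simp add: sum_distrib_left mult_ac)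
  also have "\<dots> \<le> C * (sqrt (\<Sum>v\<in>A'. (cmod (\<eta> v))\<^sup>2) * sqrt (\<Sum>v\<in>A'. (cmod (\<xi> (\<pi> v)))\<^sup>2))"
    using C by (intro mult_left_mono CS_real)
  also have "\<dots> \<le> C * (sqrt (\<Sum>v\<in>A. (cmod (\<eta> v))\<^sup>2) * sqrt (\<Sum>w\<in>B. (cmod (\<xi> w))\<^sup>2))"
  proof -
    have 1: "(\<Sum>v\<in>A'. (cmod (\<eta> v))\<^sup>2) \<le> (\<Sum>v\<in>A. (cmod (\<eta> v))\<^sup>2)"
      using fin by (intro sum_mono2) (auto simp: A'_def)
    have injA: "inj_on \<pi> A'" using inj unfolding A'_def inj_on_def by blast
    have "(\<Sum>v\<in>A'. (cmod (\<xi> (\<pi> v)))\<^sup>2) = (\<Sum>w\<in>\<pi> ` A'. (cmod (\<xi> w))\<^sup>2)"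
      using sum.reindex[OF injA, of "\<lambda>w. (cmod (\<xi> w))\<^sup>2"] by simp
    also have "\<dots> \<le> (\<Sum>w\<in>B. (cmod (\<xi> w))\<^sup>2)"
      using fin by (intro sum_mono2) (auto simp: A'_def)
    finally have 2: "(\<Sum>v\<in>A'. (cmod (\<xi> (\<pi> v)))\<^sup>2) \<le> (\<Sum>w\<in>B. (cmod (\<xi> w))\<^sup>2)" .
    show ?thesis using C 1 2
      by (intro mult_left_mono mult_mono real_sqrt_le_mono) (auto simp: sum_nonneg)
  qed
  finally show "cmod (\<Sum>v\<in>A. \<Sum>w\<in>B. cnj (\<eta> v) * T v w * \<xi> w) \<le> C * sqrt (\<Sum>v\<in>A. (cmod (\<eta> v))\<^sup>2) * sqrt (\<Sum>w\<in>B. (cmod (\<xi> w))\<^sup>2)"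
    by (simp add: mult_ac)
qed

definition mE :: "mat \<Rightarrow> mat" where
  "mE T = (\<lambda>v w. if fst v = fst w then T v w else 0)"

lemma mbound_pinch:
  assumes T: "mbound T C" and C: "C \<ge> 0"
  shows "mbound (mE T) C"
  unfolding mbound_def
proof (intro allI impI)
  fix A B :: "(nat\<times>nat) set" and \<eta> \<xi> :: "nat\<times>nat \<Rightarrow> complex"
  assume fin: "finite A" "finite B"
  define N where "N = fst ` A"
  have finN: "finite N" using fin unfolding N_def by simp
  define An where "An n = {v \<in> A. fst v = n}" for n
  define Bn where "Bn n = {w \<in> B. fst w = n}" for n
  define a where "a n = sqrt (\<Sum>v\<in>An n. (cmod (\<eta> v))\<^sup>2)" for n
  define b where "b n = sqrt (\<Sum>w\<in>Bn n. (cmod (\<xi> w))\<^sup>2)" for n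
  define g where "g v w = cnj (\<eta> v) * T v w * \<xi> w" for v w
  have row: "(\<Sum>w\<in>B. cnj (\<eta> v) * mE T v w * \<xi> w) = (\<Sum>w\<in>Bn (fst v). g v w)" for v
  proof -
    have "(\<Sum>w\<in>B. cnj (\<eta> v) * mE T v w * \<xi> w) = (\<Sum>w\<in>B. if fst w = fst v then g v w else 0)"
      by (rule sum.cong) (auto simp: mE_def g_def)
    also have "\<dots> = (\<Sum>w\<in>Bn (fst v). g v w)" unfolding Bn_def using fin(2) by (simp add: sum.inter_filter)
    finally show ?thesis .
  qed
  have "(\<Sum>v\<in>A. \<Sum>w\<in>B. cnj (\<eta> v) * mE T v w * \<xi> w) = (\<Sum>v\<in>A. \<Sum>w\<in>Bn (fst v). g v w)"
    using row by simp
  also have "\<dots> = (\<Sum>n\<in>N. \<Sum>v\<in>An n. \<Sum>w\<in>Bn (fst v). g v w)"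
    unfolding An_def N_def using fin by (intro sum.group[symmetric]) auto
  also have "\<dots> = (\<Sum>n\<in>N. \<Sum>v\<in>An n. \<Sum>w\<in>Bn n. g v w)"
    unfolding An_def by (intro sum.cong refl) auto
  finally have eq: "(\<Sum>v\<in>A. \<Sum>w\<in>B. cnj (\<eta> v) * mE T v w * \<xi> w) = (\<Sum>n\<in>N. \<Sum>v\<in>An n. \<Sum>w\<in>Bn n. g v w)" .
  have each: "cmod (\<Sum>v\<in>An n. \<Sum>w\<in>Bn n. g v w) \<le> C * a n * b n" for n
  proof -
    have "finite (An n)" "finite (Bn n)" using fin unfolding An_def Bn_def by auto
    then show ?thesis using T unfolding mbound_def g_def a_def b_def by blast
  qed
  have "cmod (\<Sum>n\<in>N. \<Sum>v\<in>An n. \<Sum>w\<in>Bn n. g v w) \<le> (\<Sum>n\<in>N. cmod (\<Sum>v\<in>An n. \<Sum>w\<in>Bn n. g v w))"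
    by (rule norm_sum)
  also have "\<dots> \<le> (\<Sum>n\<in>N. C * a n * b n)" by (rule sum_mono[OF each])
  also have "\<dots> = C * (\<Sum>n\<in>N. a n * b n)" by (simp add: sum_distrib_left mult_ac)
  also have "\<dots> \<le> C * (sqrt (\<Sum>n\<in>N. (a n)\<^sup>2) * sqrt (\<Sum>n\<in>N. (b n)\<^sup>2))"
    using C by (intro mult_left_mono CS_real)
  also have "\<dots> \<le> C * (sqrt (\<Sum>v\<in>A. (cmod (\<eta> v))\<^sup>2) * sqrt (\<Sum>w\<in>B. (cmod (\<xi> w))\<^sup>2))"
  proof -
    have "(\<Sum>n\<in>N. (a n)\<^sup>2) = (\<Sum>n\<in>N. \<Sum>v\<in>An n. (cmod (\<eta> v))\<^sup>2)"
      unfolding a_def by (simp add: sum_nonneg)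
    also have "\<dots> = (\<Sum>v\<in>A. (cmod (\<eta> v))\<^sup>2)"
      unfolding An_def N_def using fin by (intro sum.group) auto
    finally have 1: "(\<Sum>n\<in>N. (a n)\<^sup>2) = (\<Sum>v\<in>A. (cmod (\<eta> v))\<^sup>2)" .
    have "(\<Sum>n\<in>N. (b n)\<^sup>2) = (\<Sum>n\<in>N. \<Sum>w\<in>Bn n. (cmod (\<xi> w))\<^sup>2)"
      unfolding b_def by (simp add: sum_nonneg)
    also have "\<dots> = (\<Sum>n\<in>N. \<Sum>w\<in>{w\<in>{w\<in>B. fst w \<in> N}. fst w = n}. (cmod (\<xi> w))\<^sup>2)"
      unfolding Bn_def by (intro sum.cong refl) auto
    also have "\<dots> = (\<Sum>w\<in>{w\<in>B. fst w \<in> N}. (cmod (\<xi> w))\<^sup>2)"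
      using fin finN by (intro sum.group) auto
    also have "\<dots> \<le> (\<Sum>w\<in>B. (cmod (\<xi> w))\<^sup>2)" using fin by (intro sum_mono2) auto
    finally have 2: "(\<Sum>n\<in>N. (b n)\<^sup>2) \<le> (\<Sum>w\<in>B. (cmod (\<xi> w))\<^sup>2)" .
    show ?thesis using C 1 2 by (intro mult_left_mono mult_mono real_sqrt_le_mono) (auto simp: sum_nonneg)
  qed
  finally show "cmod (\<Sum>v\<in>A. \<Sum>w\<in>B. cnj (\<eta> v) * mE T v w * \<xi> w) \<le> C * sqrt (\<Sum>v\<in>A. (cmod (\<eta> v))\<^sup>2) * sqrt (\<Sum>w\<in>B. (cmod (\<xi> w))\<^sup>2)"
    unfolding eq by (simp add: mult_ac)
qed

lemma bop_mE: "T \<in> bop s \<Longrightarrow> mE T \<in> bop s"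
proof -
  assume T: "T \<in> bop s"
  then obtain C where "C \<ge> 0" "mbound T C" using bop_ex by blast
  then show ?thesis using T
    by (intro mbound_bopI'[OF mbound_pinch]) (simp_all add: mE_def bop_supp1 bop_supp2)
qed

lemma opnorm_mE: "T \<in> bop s \<Longrightarrow> opnorm (mE T) \<le> opnorm T"
  by (meson mbound_pinch opnorm_le opnorm_mbound opnorm_nonneg)

lemma tendsto_fun_iff: "((g::'a\<Rightarrow>nat\<Rightarrow>nat) \<longlongrightarrow> a) F \<longleftrightarrow> (\<forall>k. ((\<lambda>N. g N k) \<longlongrightarrow> a k) F)"
proof -
  have "(g \<longlongrightarrow> a) F \<longleftrightarrow> limitin (product_topology (\<lambda>_. euclidean) UNIV) g a F"
    by (simp add: euclidean_product_topology)
  also have "\<dots> \<longleftrightarrow> (\<forall>k. ((\<lambda>N. g N k) \<longlongrightarrow> a k) F)"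
    by (subst limitin_componentwise) simp
  finally show ?thesis .
qed

lemma compact_Zs: "compact (Zs s)"
proof -
  have "Zs s = PiE UNIV (\<lambda>_. {..<s})" by (auto simp: Zs_def PiE_def Pi_def)
  moreover have "compactin (product_topology (\<lambda>_. euclidean) UNIV) (PiE UNIV (\<lambda>_. {..<s::nat}))"
    by (simp add: compactin_PiE finite_imp_compact)
  ultimately show ?thesis by (simp add: euclidean_product_topology)
qed

lemma sdigits_Zs: "s > 0 \<Longrightarrow> sdigits s x \<in> Zs s"
  by (simp add: sdigits_def Zs_def)

lemma sdigits_0: "sdigits s 0 = (\<lambda>k. 0)"
  by (simp add: sdigits_def)

fun num :: "nat \<Rightarrow> (nat \<Rightarrow> nat) \<Rightarrow> nat \<Rightarrow> nat" where
  "num s a 0 = 1"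
| "num s a (Suc N) = a 0 + s * num s (\<lambda>i. a (Suc i)) N"

lemma num_digits: "(\<forall>i. a i < s) \<Longrightarrow> k < N \<Longrightarrow> sdigits s (num s a N) k = a k"
proof (induction N arbitrary: a k)
  case 0 then show ?case by simp
next
  case (Suc N)
  define y where "y = num s (\<lambda>i. a (Suc i)) N"
  have x: "num s a (Suc N) = a 0 + s * y" unfolding y_def by simp
  have s0: "s > 0" using Suc.prems by (metis gr_zeroI not_less_zero)
  show ?case
  proof (cases k)
    case 0 then show ?thesis using Suc.prems unfolding x sdigits_def by simp
  next
    case (Suc k')
    have "(a 0 + s * y) div s = y" using Suc.prems s0 by simp
    then have "(a 0 + s * y) div s ^ k = y div s ^ k'"
      using Suc by (simp add: div_mult2_eq)
    then have "sdigits s (num s a (Suc N)) k = sdigits s y k'" unfolding x sdigits_def by simp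
    also have "\<dots> = a k" unfolding y_def using Suc.IH[of "\<lambda>i. a (Suc i)" k'] Suc.prems Suc by simp
    finally show ?thesis .
  qed
qed

lemma num_pos: "s > 0 \<Longrightarrow> num s a N \<ge> 1"
proof (induction N arbitrary: a)
  case 0 then show ?case by simp
next
  case (Suc N)
  then have "num s (\<lambda>i. a (Suc i)) N \<ge> 1" by blast
  moreover have "1 \<le> s" using Suc.prems by simp
  ultimately have "1 * 1 \<le> s * num s (\<lambda>i. a (Suc i)) N" by (intro mult_mono) auto
  then show ?case by (subst num.simps(2)) linarith
qed

lemma num_lim: "a \<in> Zs s \<Longrightarrow> (\<lambda>N. sdigits s (num s a N)) \<longlonglongrightarrow> a"
  unfolding tendsto_fun_iff
proof
  fix k assume a: "a \<in> Zs s"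
  have "eventually (\<lambda>N. sdigits s (num s a N) k = a k) sequentially"
    unfolding eventually_sequentially using a num_digits[of a s k] by (auto simp: Zs_def intro!: exI[of _ "Suc k"])
  then show "(\<lambda>N. sdigits s (num s a N) k) \<longlonglongrightarrow> a k" by (rule tendsto_eventually)
qed

lemma dense_bound:
  fixes h :: "(nat \<Rightarrow> nat) \<Rightarrow> complex"
  assumes s: "s > 0" and h: "continuous_on (Zs s) h"
    and b: "\<And>x. x \<ge> 1 \<Longrightarrow> cmod (h (sdigits s x)) \<le> B" and a: "a \<in> Zs s"
  shows "cmod (h a) \<le> B"
proof -
  have "(\<lambda>N. h (sdigits s (num s a N))) \<longlonglongrightarrow> h a"
    using continuous_on_tendsto_compose[OF h num_lim[OF a] a] sdigits_Zs[OF s] by simp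
  moreover have "eventually (\<lambda>N. cmod (h (sdigits s (num s a N))) \<le> B) sequentially"
    using b num_pos[OF s] by simp
  ultimately show ?thesis by (rule Lim_norm_ubound[rotated]) simp
qed

lemma dense_eq:
  fixes f g :: "(nat \<Rightarrow> nat) \<Rightarrow> complex"
  assumes s: "s > 0" and f: "continuous_on (Zs s) f" and g: "continuous_on (Zs s) g"
    and eq: "\<And>x. x \<ge> 1 \<Longrightarrow> f (sdigits s x) = g (sdigits s x)" and a: "a \<in> Zs s"
  shows "f a = g a"
proof -
  have "cmod (f a - g a) \<le> 0"
    using dense_bound[OF s _ _ a, of "\<lambda>a. f a - g a" 0] f g eq by (auto intro: continuous_on_diff)
  then show ?thesis by simp
qed

lemma CZs_bounded: "f \<in> CZs s \<Longrightarrow> \<exists>B\<ge>0. \<forall>a. cmod (f a) \<le> B"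
proof -
  assume f: "f \<in> CZs s"
  then have "compact (f ` Zs s)" using compact_continuous_image compact_Zs by (auto simp: CZs_def)
  then obtain B where B: "\<forall>y\<in>f ` Zs s. norm y \<le> B" using compact_imp_bounded bounded_iff by metis
  have "cmod (f a) \<le> max B 0" for a using f B by (cases "a \<in> Zs s") (auto simp: CZs_def)
  then show ?thesis by (meson max.cobounded2)
qed

definition dg :: "nat \<Rightarrow> ((nat \<Rightarrow> nat) \<Rightarrow> complex) \<times> (nat \<Rightarrow> complex) \<Rightarrow> nat \<times> nat \<Rightarrow> complex" where
  "dg s F v = (if snd v = 0 then snd F (fst v) else fst F (sdigits s (snd v)))"

lemma dg_bounded: "F \<in> CXV s \<Longrightarrow> \<exists>B\<ge>0. \<forall>v. cmod (dg s F v) \<le> B"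
proof -
  assume F: "F \<in> CXV s"
  obtain f x where Fp: "F = (f, x)" by fastforce
  have f: "f \<in> CZs s" and x: "x \<longlonglongrightarrow> f (sdigits s 0)" using F Fp by (auto simp: CXV_def)
  obtain B1 where B1: "B1 \<ge> 0" "\<forall>a. cmod (f a) \<le> B1" using CZs_bounded[OF f] by blast
  obtain B2 where B2: "\<forall>n. cmod (x n) \<le> B2" using convergent_imp_Bseq[of x] x
    unfolding Bseq_def convergent_def by blast
  have "cmod (dg s F v) \<le> max B1 B2" for v
    using B1 B2 unfolding dg_def Fp by (auto intro: max.coboundedI1 max.coboundedI2)
  then show ?thesis using B1 by (meson max.coboundedI1)
qed

lemma Vset_iff: "v \<in> Vset s \<longleftrightarrow> snd v < s ^ fst v"
  by (cases v) (simp add: Vset_def)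

lemma Vset_0: "s > 0 \<Longrightarrow> (n, 0) \<in> Vset s"
  by (simp add: Vset_def)

lemma TV_entry:
  assumes s: "s > 0"
  shows "TV s F v w = (if v = w \<and> v \<in> Vset s then dg s F v else 0)"
proof -
  obtain f x where Fp: "F = (f, x)" by fastforce
  define c where "c = (if v = w \<and> snd v = 0 then x (fst v) - f (sdigits s 0) else 0)"
  have "(\<lambda>n. mscale (x n - f (sdigits s 0)) (Pn s n) v w) = (\<lambda>n. if n = fst v then c else 0)"
    unfolding c_def mscale_def Pn_def by (cases v, cases w) auto
  then have su: "(\<Sum>n. mscale (x n - f (sdigits s 0)) (Pn s n) v w) = c"
    using sums_unique[OF sums_single[of "fst v" "\<lambda>_. c"]] by simp
  show ?thesis
    unfolding TV_def Fp prod.case madd_def su unfolding c_def Mop_def dg_def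
    using Vset_0[OF s] by (cases v) auto
qed

lemma diag_bop:
  assumes "\<And>v w. T v w \<noteq> 0 \<Longrightarrow> v = w \<and> v \<in> Vset s" "\<And>v. cmod (T v v) \<le> C" "C \<ge> 0"
  shows "T \<in> bop s"
proof (rule mbound_bopI')
  show "mbound T C"
  proof (rule mbound_graph[where \<pi>=id])
    show "cmod (T v w) \<le> C" for v w
    proof (cases "T v w = 0")
      case True then show ?thesis using assms(3) by simp
    next
      case False then have "v = w" using assms(1) by blast
      then show ?thesis using assms(2) by simp
    qed
  qed (use assms in auto)
qed (use assms in auto)

lemma TV_bop: "s > 0 \<Longrightarrow> F \<in> CXV s \<Longrightarrow> TV s F \<in> bop s"
proof -
  assume s: "s > 0" and F: "F \<in> CXV s"
  obtain B where "B \<ge> 0" "\<forall>v. cmod (dg s F v) \<le> B" using dg_bounded[OF F] by blast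
  then show ?thesis by (intro diag_bop[of _ _ B]) (auto simp: TV_entry[OF s] split: if_splits)
qed

lemma infsum_single:
  fixes f :: "'a \<Rightarrow> complex"
  assumes "\<And>u. u \<noteq> u0 \<Longrightarrow> f u = 0"
  shows "infsum f UNIV = f u0"
proof -
  have "infsum f UNIV = infsum f {u0}"
    by (rule infsum_cong_neutral) (use assms in auto)
  then show ?thesis by simp
qed

definition padd :: "_ \<Rightarrow> _ \<Rightarrow> ((nat \<Rightarrow> nat) \<Rightarrow> complex) \<times> (nat \<Rightarrow> complex)" where
  "padd F G = (\<lambda>a. fst F a + fst G a, \<lambda>n. snd F n + snd G n)"
definition pmul :: "_ \<Rightarrow> _ \<Rightarrow> ((nat \<Rightarrow> nat) \<Rightarrow> complex) \<times> (nat \<Rightarrow> complex)" where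
  "pmul F G = (\<lambda>a. fst F a * fst G a, \<lambda>n. snd F n * snd G n)"
definition pscale :: "complex \<Rightarrow> _ \<Rightarrow> ((nat \<Rightarrow> nat) \<Rightarrow> complex) \<times> (nat \<Rightarrow> complex)" where
  "pscale c F = (\<lambda>a. c * fst F a, \<lambda>n. c * snd F n)"
definition pcnj :: "_ \<Rightarrow> ((nat \<Rightarrow> nat) \<Rightarrow> complex) \<times> (nat \<Rightarrow> complex)" where
  "pcnj F = (\<lambda>a. cnj (fst F a), \<lambda>n. cnj (snd F n))"

lemma CXV_D: "F \<in> CXV s \<Longrightarrow> continuous_on (Zs s) (fst F) \<and> (\<forall>a. a \<notin> Zs s \<longrightarrow> fst F a = 0) \<and> snd F \<longlonglongrightarrow> fst F (sdigits s 0)"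
  by (cases F) (auto simp: CXV_def CZs_def)

lemma CXV_I: "continuous_on (Zs s) (fst F) \<Longrightarrow> (\<And>a. a \<notin> Zs s \<Longrightarrow> fst F a = 0) \<Longrightarrow> snd F \<longlonglongrightarrow> fst F (sdigits s 0) \<Longrightarrow> F \<in> CXV s"
  by (cases F) (auto simp: CXV_def CZs_def)

lemma CXV_padd: "F \<in> CXV s \<Longrightarrow> G \<in> CXV s \<Longrightarrow> padd F G \<in> CXV s"
  unfolding padd_def by (rule CXV_I) (auto dest!: CXV_D intro: continuous_on_add tendsto_add)
lemma CXV_pmul: "F \<in> CXV s \<Longrightarrow> G \<in> CXV s \<Longrightarrow> pmul F G \<in> CXV s"
  unfolding pmul_def by (rule CXV_I) (auto dest!: CXV_D intro: continuous_on_mult tendsto_mult)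
lemma CXV_pscale: "F \<in> CXV s \<Longrightarrow> pscale c F \<in> CXV s"
  unfolding pscale_def by (rule CXV_I) (auto dest!: CXV_D intro: continuous_on_mult continuous_on_const tendsto_mult)
lemma CXV_pcnj: "F \<in> CXV s \<Longrightarrow> pcnj F \<in> CXV s"
  unfolding pcnj_def by (rule CXV_I) (auto dest!: CXV_D intro: continuous_on_cnj tendsto_cnj)

lemma TV_padd: "s > 0 \<Longrightarrow> TV s (padd F G) = madd (TV s F) (TV s G)"
  by (auto simp: fun_eq_iff TV_entry madd_def dg_def padd_def)
lemma TV_pscale: "s > 0 \<Longrightarrow> TV s (pscale c F) = mscale c (TV s F)"
  by (auto simp: fun_eq_iff TV_entry mscale_def dg_def pscale_def)
lemma TV_pcnj: "s > 0 \<Longrightarrow> TV s (pcnj F) = madj (TV s F)"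
  by (auto simp: fun_eq_iff TV_entry madj_def dg_def pcnj_def)
lemma TV_pmul: "s > 0 \<Longrightarrow> TV s (pmul F G) = mmult (TV s F) (TV s G)"
proof -
  assume s: "s > 0"
  have "mmult (TV s F) (TV s G) v w = TV s (pmul F G) v w" for v w
  proof -
    have "mmult (TV s F) (TV s G) v w = TV s F v v * TV s G v w"
      unfolding mmult_def by (rule infsum_single) (simp add: TV_entry[OF s])
    then show ?thesis by (auto simp: TV_entry[OF s] dg_def pmul_def)
  qed
  then show ?thesis by (simp add: fun_eq_iff)
qed

lemma TV_zero: "s > 0 \<Longrightarrow> TV s (\<lambda>a. 0, \<lambda>n. 0) = mzero"
  by (auto simp: fun_eq_iff TV_entry mzero_def dg_def)

lemma CXV_zero: "(\<lambda>a. 0, \<lambda>n. 0) \<in> CXV s"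
  by (rule CXV_I) auto

lemma Mop_TV: "s > 0 \<Longrightarrow> f \<in> CZs s \<Longrightarrow> Mop s f = TV s (f, \<lambda>n. f (sdigits s 0)) \<and> (f, \<lambda>n. f (sdigits s 0)) \<in> CXV s"
  by (auto simp: fun_eq_iff TV_entry Mop_def dg_def CXV_def sdigits_0)

lemma Pn_TV: "s > 0 \<Longrightarrow> Pn s n = TV s (\<lambda>a. 0, \<lambda>m. if m = n then 1 else 0) \<and> (\<lambda>a. 0, \<lambda>m. if m = n then 1 else 0) \<in> CXV s"
proof
  assume s: "s > 0"
  show "Pn s n = TV s (\<lambda>a. 0, \<lambda>m. if m = n then 1 else 0)"
    using Vset_0[OF s] by (auto simp: fun_eq_iff TV_entry[OF s] Pn_def dg_def)
  have "(\<lambda>m. if m = n then 1 else 0 :: complex) \<longlonglongrightarrow> 0"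
    by (rule tendsto_eventually) (auto simp: eventually_sequentially intro!: exI[of _ "Suc n"])
  then show "(\<lambda>a. 0, \<lambda>m. if m = n then 1 else 0) \<in> CXV s" by (intro CXV_I) auto
qed

definition psum :: "nat \<Rightarrow> ((nat \<Rightarrow> nat) \<Rightarrow> complex) \<times> (nat \<Rightarrow> complex) \<Rightarrow> nat \<Rightarrow> mat" where
  "psum s F N = madd (\<lambda>v w. \<Sum>n<N. mscale (snd F n - fst F (sdigits s 0)) (Pn s n) v w) (Mop s (fst F))"

lemma psum_diff_entry:
  assumes s: "s > 0"
  shows "mdiff (TV s F) (psum s F N) v w = (if v = w \<and> snd v = 0 \<and> N \<le> fst v then snd F (fst v) - fst F (sdigits s 0) else 0)"
proof -
  define c where "c = (if v = w \<and> snd v = 0 then snd F (fst v) - fst F (sdigits s 0) else 0)"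
  have "(\<Sum>n<N. mscale (snd F n - fst F (sdigits s 0)) (Pn s n) v w) = (\<Sum>n<N. if n = fst v then c else 0)"
    unfolding c_def mscale_def Pn_def by (rule sum.cong) (auto simp: prod_eq_iff)
  also have "\<dots> = (if fst v < N then c else 0)" by simp
  finally have e: "(\<Sum>n<N. mscale (snd F n - fst F (sdigits s 0)) (Pn s n) v w) = (if fst v < N then c else 0)" .
  show ?thesis unfolding mdiff_def psum_def madd_def e TV_entry[OF s] c_def Mop_def dg_def
    using Vset_0[OF s] by (cases v; cases w) (auto simp: sdigits_0)
qed

lemma psum_conv:
  assumes s: "s > 0" and F: "F \<in> CXV s"
  shows "(\<lambda>N. opnorm (mdiff (TV s F) (psum s F N))) \<longlonglongrightarrow> 0"
proof -
  have lim: "snd F \<longlonglongrightarrow> fst F (sdigits s 0)" using CXV_D[OF F] by blast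
  have bnd: "opnorm (mdiff (TV s F) (psum s F N)) \<le> e"
    if e: "e \<ge> 0" "\<And>n. n \<ge> N \<Longrightarrow> cmod (snd F n - fst F (sdigits s 0)) \<le> e" for N e
  proof (rule opnorm_le[OF _ e(1)])
    show "mbound (mdiff (TV s F) (psum s F N)) e"
    proof (rule mbound_graph[where \<pi>=id])
      show "cmod (mdiff (TV s F) (psum s F N) v w) \<le> e" for v w
        unfolding psum_diff_entry[OF s] using e by auto
    qed (auto simp: psum_diff_entry[OF s] e split: if_splits)
  qed
  have nn: "opnorm (mdiff (TV s F) (psum s F N)) \<ge> 0" for N
  proof -
    have "mbound (mdiff (TV s F) (psum s F N)) 1 \<or> True" by simp
    show ?thesis unfolding opnorm_def
    proof (rule cInf_greatest)
      obtain e where "e \<ge> 0" "\<forall>n. cmod (snd F n - fst F (sdigits s 0)) \<le> e"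
      proof -
        obtain B where B: "B \<ge> 0" "\<forall>v. cmod (dg s F v) \<le> B" using dg_bounded[OF F] by blast
        obtain B1 where B1: "B1 \<ge> 0" "\<forall>a. cmod (fst F a) \<le> B1"
          using CZs_bounded[of "fst F" s] F by (cases F) (auto simp: CXV_def)
        have "cmod (snd F n - fst F (sdigits s 0)) \<le> B + B1" for n
          using B(2)[rule_format, of "(n, 0)"] B1(2)[rule_format, of "sdigits s 0"]
          by (intro order_trans[OF norm_triangle_ineq4]) (auto simp: dg_def)
        then show ?thesis using that B B1 by (meson add_nonneg_nonneg)
      qed
      then have "mbound (mdiff (TV s F) (psum s F N)) e"
        by (intro mbound_graph[where \<pi>=id]) (auto simp: psum_diff_entry[OF s] split: if_splits)
      then show "{C. 0 \<le> C \<and> mbound (mdiff (TV s F) (psum s F N)) C} \<noteq> {}" using \<open>e \<ge> 0\<close> by blast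
    qed auto
  qed
  show ?thesis
  proof (rule LIMSEQ_I)
    fix r :: real assume r: "r > 0"
    obtain N0 where N0: "\<forall>n\<ge>N0. dist (snd F n) (fst F (sdigits s 0)) < r / 2"
      using lim r unfolding lim_sequentially by (meson half_gt_zero)
    have "norm (opnorm (mdiff (TV s F) (psum s F N)) - 0) < r" if "N \<ge> N0" for N
    proof -
      have "opnorm (mdiff (TV s F) (psum s F N)) \<le> r / 2"
        using r N0 that by (intro bnd) (auto simp: dist_norm less_imp_le)
      then show ?thesis using nn[of N] r by simp
    qed
    then show "\<exists>no. \<forall>n\<ge>no. norm (opnorm (mdiff (TV s F) (psum s F n)) - 0) < r" by blast
  qed
qed

lemma in_cstar_gen: "(\<And>A. cstar_closed s A \<Longrightarrow> G \<subseteq> A \<Longrightarrow> T \<in> A) \<Longrightarrow> T \<in> cstar_gen s G"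
  unfolding cstar_gen_def by blast

lemma cstar_gen_sub: "cstar_closed s A \<Longrightarrow> G \<subseteq> A \<Longrightarrow> cstar_gen s G \<subseteq> A"
  unfolding cstar_gen_def by blast

lemma cc_bop: "cstar_closed s A \<Longrightarrow> A \<subseteq> bop s" unfolding cstar_closed_def by blast
lemma cc_zero: "cstar_closed s A \<Longrightarrow> mzero \<in> A" unfolding cstar_closed_def by blast
lemma cc_add: "cstar_closed s A \<Longrightarrow> S \<in> A \<Longrightarrow> T \<in> A \<Longrightarrow> madd S T \<in> A" unfolding cstar_closed_def by blast
lemma cc_mult: "cstar_closed s A \<Longrightarrow> S \<in> A \<Longrightarrow> T \<in> A \<Longrightarrow> mmult S T \<in> A" unfolding cstar_closed_def by blast
lemma cc_scale: "cstar_closed s A \<Longrightarrow> T \<in> A \<Longrightarrow> mscale c T \<in> A" unfolding cstar_closed_def by blast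
lemma cc_adj: "cstar_closed s A \<Longrightarrow> T \<in> A \<Longrightarrow> madj T \<in> A" unfolding cstar_closed_def by blast
lemma cc_lim: "cstar_closed s A \<Longrightarrow> (\<And>k. X k \<in> A) \<Longrightarrow> T \<in> bop s \<Longrightarrow> (\<lambda>k. opnorm (mdiff (X k) T)) \<longlonglongrightarrow> 0 \<Longrightarrow> T \<in> A"
  unfolding cstar_closed_def by blast

lemma TV_in_BV:
  assumes s: "s > 0" and F: "F \<in> CXV s"
  shows "TV s F \<in> BV s"
  unfolding BV_def
proof (rule in_cstar_gen)
  fix A assume A: "cstar_closed s A" and G: "Mop s ` CZs s \<union> range (Pn s) \<subseteq> A"
  have f: "fst F \<in> CZs s" using F by (cases F) (auto simp: CXV_def)
  have sums: "(\<lambda>v w. \<Sum>n<N. mscale (snd F n - fst F (sdigits s 0)) (Pn s n) v w) \<in> A" for N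
  proof (induction N)
    case 0 then show ?case using cc_zero[OF A] by (simp add: mzero_def)
  next
    case (Suc N)
    have "(\<lambda>v w. \<Sum>n<Suc N. mscale (snd F n - fst F (sdigits s 0)) (Pn s n) v w)
      = madd (\<lambda>v w. \<Sum>n<N. mscale (snd F n - fst F (sdigits s 0)) (Pn s n) v w) (mscale (snd F N - fst F (sdigits s 0)) (Pn s N))"
      by (simp add: madd_def fun_eq_iff)
    moreover have "Pn s N \<in> A" using G by auto
    then have "mscale (snd F N - fst F (sdigits s 0)) (Pn s N) \<in> A" by (rule cc_scale[OF A])
    ultimately show ?case using cc_add[OF A Suc.IH] by simp
  qed
  have ps: "psum s F N \<in> A" for N unfolding psum_def using sums cc_add[OF A] G f by blast
  have TVb: "TV s F \<in> bop s" using TV_bop[OF s F] .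
  show "TV s F \<in> A"
  proof (rule cc_lim[OF A ps TVb])
    have "opnorm (mdiff (psum s F N) (TV s F)) = opnorm (mdiff (TV s F) (psum s F N))" for N
      using opnorm_diff_sym ps cc_bop[OF A] TVb by blast
    then show "(\<lambda>k. opnorm (mdiff (psum s F k) (TV s F))) \<longlonglongrightarrow> 0" using psum_conv[OF s F] by simp
  qed
qed

lemma lt_pow: "s \<ge> 2 \<Longrightarrow> (x::nat) < s ^ x"
  using less_exp[of x] power_mono[of 2 s x] by linarith

lemma TV_inj:
  assumes s: "s \<ge> 2"
  shows "inj_on (TV s) (CXV s)"
proof (rule inj_onI)
  fix F G assume F: "F \<in> CXV s" and G: "G \<in> CXV s" and eq: "TV s F = TV s G"
  have s0: "s > 0" using s by simp
  have d: "dg s F v = dg s G v" if "v \<in> Vset s" for v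
    using fun_cong[OF fun_cong[OF eq, of v], of v] that by (simp add: TV_entry[OF s0])
  have 1: "snd F = snd G"
  proof
    fix n show "snd F n = snd G n" using d[of "(n,0)"] Vset_0[OF s0] by (simp add: dg_def)
  qed
  have 2: "fst F = fst G"
  proof
    fix a
    show "fst F a = fst G a"
    proof (cases "a \<in> Zs s")
      case True
      show ?thesis
      proof (rule dense_eq[OF s0 _ _ _ True])
        show "continuous_on (Zs s) (fst F)" "continuous_on (Zs s) (fst G)" using CXV_D F G by auto
        fix x :: nat assume x: "x \<ge> 1"
        have "(x, x) \<in> Vset s" using lt_pow[OF s] by (simp add: Vset_def)
        then show "fst F (sdigits s x) = fst G (sdigits s x)" using d[of "(x,x)"] x by (simp add: dg_def)
      qed
    next
      case False then show ?thesis using CXV_D F G by auto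
    qed
  qed
  show "F = G" using 1 2 by (simp add: prod_eq_iff)
qed

lemma zero_by_eps:
  fixes c :: complex
  assumes "\<And>k. cmod c \<le> B * \<epsilon> k" "\<epsilon> \<longlonglongrightarrow> 0"
  shows "c = 0"
proof -
  have "(\<lambda>k. B * \<epsilon> k) \<longlonglongrightarrow> B * 0" by (intro tendsto_mult tendsto_const assms(2))
  then have "cmod c \<le> 0" using assms(1) by (intro tendsto_lowerbound[of "\<lambda>k. B * \<epsilon> k"]) auto
  then show ?thesis by simp
qed

lemma TV_diag0: "s > 0 \<Longrightarrow> TV s F (n,0) (n,0) = snd F n"
  using Vset_0[of s n] by (simp add: TV_entry dg_def)

lemma TV_diagx: "s > 0 \<Longrightarrow> v \<in> Vset s \<Longrightarrow> snd v \<noteq> 0 \<Longrightarrow> TV s F v v = fst F (sdigits s (snd v))"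
  by (simp add: TV_entry dg_def)

lemma E2_lemma:
  assumes s: "s \<ge> 2" and F: "F \<in> CXV s" and G: "G \<in> CXV s"
    and e1: "\<And>v w. cmod (TV s F v w - T v w) \<le> e1" and e2: "\<And>v w. cmod (TV s G v w - T v w) \<le> e2"
  shows "cmod (fst F a - fst G a) \<le> e1 + e2"
proof -
  have s0: "s > 0" using s by simp
  have c1: "e1 \<ge> 0" using e1[of "(0,0)" "(0,0)"] norm_ge_zero order_trans by blast
  have c2: "e2 \<ge> 0" using e2[of "(0,0)" "(0,0)"] norm_ge_zero order_trans by blast
  show ?thesis
  proof (cases "a \<in> Zs s")
    case True
    show ?thesis
    proof (rule dense_bound[where h="\<lambda>a. fst F a - fst G a" and B="e1 + e2", OF s0 _ _ True])
      show "continuous_on (Zs s) (\<lambda>a. fst F a - fst G a)" using CXV_D[OF F] CXV_D[OF G] by (intro continuous_on_diff) auto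
      fix x :: nat assume x: "x \<ge> 1"
      have V: "(x, x) \<in> Vset s" using lt_pow[OF s] by (simp add: Vset_def)
      have hF: "TV s F (x,x) (x,x) = fst F (sdigits s x)"
        using V x unfolding TV_entry[OF s0] dg_def by simp
      have hG: "TV s G (x,x) (x,x) = fst G (sdigits s x)"
        using V x unfolding TV_entry[OF s0] dg_def by simp
      have "cmod (fst F (sdigits s x) - fst G (sdigits s x)) = cmod ((TV s F (x,x) (x,x) - T (x,x) (x,x)) - (TV s G (x,x) (x,x) - T (x,x) (x,x)))"
        unfolding hF hG by simp
      also have "\<dots> \<le> cmod (TV s F (x,x) (x,x) - T (x,x) (x,x)) + cmod (TV s G (x,x) (x,x) - T (x,x) (x,x))"
        by (rule norm_triangle_ineq4)
      also have "\<dots> \<le> e1 + e2" using e1 e2 by (intro add_mono)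
      finally show "cmod (fst F (sdigits s x) - fst G (sdigits s x)) \<le> e1 + e2" .
    qed
  next
    case False then show ?thesis using CXV_D[OF F] CXV_D[OF G] c1 c2 by simp
  qed
qed

lemma TV_limit:
  assumes s: "s \<ge> 2" and F: "\<And>k. F k \<in> CXV s" and T: "T \<in> bop s"
    and lim: "(\<lambda>k. opnorm (mdiff (TV s (F k)) T)) \<longlonglongrightarrow> 0"
  shows "T \<in> TV s ` CXV s"
proof -
  have s0: "s > 0" using s by simp
  define \<epsilon> where "\<epsilon> k = opnorm (mdiff (TV s (F k)) T)" for k
  have lim': "\<epsilon> \<longlonglongrightarrow> 0" using lim unfolding \<epsilon>_def .
  have Db: "mdiff (TV s (F k)) T \<in> bop s" for k by (intro bop_diff TV_bop[OF s0 F] T)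
  have e0: "\<epsilon> k \<ge> 0" for k unfolding \<epsilon>_def using opnorm_nonneg[OF Db] .
  have E1: "cmod (TV s (F k) v w - T v w) \<le> \<epsilon> k" for k v w
    using opnorm_entry[OF Db, of k v w] unfolding \<epsilon>_def mdiff_def .
  define f where "f k = fst (F k)" for k
  have fc: "continuous_on (Zs s) (f k)" and f0: "\<And>a. a \<notin> Zs s \<Longrightarrow> f k a = 0"
    and fl: "snd (F k) \<longlonglongrightarrow> f k (sdigits s 0)" for k
    using CXV_D[OF F] unfolding f_def by auto
  have E2: "cmod (f k a - f m a) \<le> \<epsilon> k + \<epsilon> m" for k m a
    unfolding f_def by (rule E2_lemma[OF s F F E1 E1])
  have ev: "\<exists>K. \<forall>k\<ge>K. \<epsilon> k < r" if r: "r > 0" for r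
  proof -
    obtain K where "\<forall>n\<ge>K. dist (\<epsilon> n) 0 < r" using lim' r unfolding lim_sequentially by blast
    then have "\<forall>n\<ge>K. \<epsilon> n < r" by (auto simp: dist_real_def abs_less_iff)
    then show ?thesis by blast
  qed
  have cau: "Cauchy (\<lambda>k. f k a)" for a
  proof (rule metric_CauchyI)
    fix r :: real assume r: "r > 0"
    obtain K where K: "\<forall>k\<ge>K. \<epsilon> k < r / 2" using ev[of "r/2"] r by auto
    have "dist (f m a) (f n a) < r" if "m \<ge> K" "n \<ge> K" for m n
    proof -
      have "dist (f m a) (f n a) \<le> \<epsilon> m + \<epsilon> n" using E2 by (simp add: dist_norm)
      also have "\<dots> < r / 2 + r / 2" using K that by (intro add_strict_mono) auto
      finally show ?thesis by simp
    qed
    then show "\<exists>M. \<forall>m\<ge>M. \<forall>n\<ge>M. dist (f m a) (f n a) < r" by blast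
  qed
  define g where "g a = (if a \<in> Zs s then lim (\<lambda>k. f k a) else 0)" for a
  have gl: "(\<lambda>k. f k a) \<longlonglongrightarrow> g a" for a
  proof (cases "a \<in> Zs s")
    case True then show ?thesis unfolding g_def using cau[of a] by (simp add: Cauchy_convergent_iff convergent_LIMSEQ_iff)
  next
    case False then show ?thesis unfolding g_def using f0 by simp
  qed
  have E4: "cmod (f k a - g a) \<le> \<epsilon> k" for k a
  proof -
    have "(\<lambda>m. cmod (f k a - f m a)) \<longlonglongrightarrow> cmod (f k a - g a)" by (intro tendsto_intros gl)
    moreover have "(\<lambda>m. \<epsilon> k + \<epsilon> m) \<longlonglongrightarrow> \<epsilon> k + 0" by (intro tendsto_intros lim')
    ultimately show ?thesis using E2 by (intro LIMSEQ_le[where X="\<lambda>m. cmod (f k a - f m a)"]) auto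
  qed
  have gc: "continuous_on (Zs s) g"
  proof (rule uniform_limit_theorem[where f=f and F=sequentially])
    show "\<forall>\<^sub>F n in sequentially. continuous_on (Zs s) (f n)" using fc by simp
    show "uniform_limit (Zs s) f g sequentially"
    proof (rule uniform_limitI)
      fix e :: real assume e: "e > 0"
      obtain K where K: "\<forall>k\<ge>K. \<epsilon> k < e" using ev e by blast
      have "\<forall>n\<ge>K. \<forall>x\<in>Zs s. dist (f n x) (g x) < e"
      proof (intro allI impI ballI)
        fix n x assume "n \<ge> K"
        then have "\<epsilon> n < e" using K by blast
        moreover have "dist (f n x) (g x) \<le> \<epsilon> n" using E4 by (simp add: dist_norm)
        ultimately show "dist (f n x) (g x) < e" by linarith
      qed
      then show "\<forall>\<^sub>F n in sequentially. \<forall>x\<in>Zs s. dist (f n x) (g x) < e"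
        unfolding eventually_sequentially by blast
    qed
  qed simp
  define z where "z n = T (n, 0) (n, 0)" for n
  have zl: "z \<longlonglongrightarrow> g (sdigits s 0)"
  proof (rule LIMSEQ_I)
    fix r :: real assume r: "r > 0"
    obtain k where k: "\<epsilon> k < r / 3" using ev[of "r/3"] r by auto
    obtain N where N: "\<forall>n\<ge>N. dist (snd (F k) n) (f k (sdigits s 0)) < r / 3"
      using fl[of k] r unfolding lim_sequentially by (meson zero_less_divide_iff zero_less_numeral)
    have "norm (z n - g (sdigits s 0)) < r" if n: "n \<ge> N" for n
    proof -
      have "z n - g (sdigits s 0) = (T (n,0) (n,0) - TV s (F k) (n,0) (n,0)) + (snd (F k) n - f k (sdigits s 0)) + (f k (sdigits s 0) - g (sdigits s 0))"
        unfolding z_def f_def TV_diag0[OF s0] by simp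
      also have "norm \<dots> \<le> norm (T (n,0) (n,0) - TV s (F k) (n,0) (n,0)) + norm (snd (F k) n - f k (sdigits s 0)) + norm (f k (sdigits s 0) - g (sdigits s 0))"
        by (intro order_trans[OF norm_triangle_ineq] add_mono) (auto intro: norm_triangle_ineq)
      also have "\<dots> < r / 3 + r / 3 + r / 3"
      proof -
        have "norm (T (n,0) (n,0) - TV s (F k) (n,0) (n,0)) \<le> \<epsilon> k" using E1[of k "(n,0)" "(n,0)"] by (simp add: norm_minus_commute)
        moreover have "norm (snd (F k) n - f k (sdigits s 0)) < r / 3" using N n by (simp add: dist_norm)
        moreover have "norm (f k (sdigits s 0) - g (sdigits s 0)) \<le> \<epsilon> k" using E4 by blast
        ultimately show ?thesis using k by linarith
      qed
      finally show ?thesis by simp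
    qed
    then show "\<exists>no. \<forall>n\<ge>no. norm (z n - g (sdigits s 0)) < r" by blast
  qed
  have G: "(g, z) \<in> CXV s" by (rule CXV_I) (use gc zl in \<open>auto simp: g_def\<close>)
  have "T = TV s (g, z)"
  proof (intro ext)
    fix v w
    show "T v w = TV s (g, z) v w"
    proof (cases "v = w \<and> v \<in> Vset s")
      case False
      show ?thesis
      proof (cases "v \<in> Vset s \<and> w \<in> Vset s")
        case True
        then have "v \<noteq> w" using False by auto
        have "T v w = 0"
        proof (rule zero_by_eps[where B=1 and \<epsilon>=\<epsilon>, OF _ lim'])
          fix k
          have "TV s (F k) v w = 0" using \<open>v \<noteq> w\<close> by (simp add: TV_entry[OF s0])
          then show "cmod (T v w) \<le> 1 * \<epsilon> k" using E1[of k v w] by simp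
        qed
        then show ?thesis using False by (auto simp: TV_entry[OF s0])
      next
        case False then show ?thesis using T by (auto simp: TV_entry[OF s0] bop_supp1 bop_supp2)
      qed
    next
      case True
      then have vw: "v = w" "v \<in> Vset s" by auto
      show ?thesis
      proof (cases "snd v = 0")
        case True
        then obtain n where n: "v = (n, 0)" by (cases v) auto
        have wn: "w = (n, 0)" using vw n by simp
        show ?thesis unfolding n wn by (simp add: TV_diag0[OF s0] z_def)
      next
        case False
        have "T v v - g (sdigits s (snd v)) = 0"
        proof (rule zero_by_eps[where B=2 and \<epsilon>=\<epsilon>, OF _ lim'])
          fix k
          have "T v v - g (sdigits s (snd v)) = (T v v - TV s (F k) v v) + (f k (sdigits s (snd v)) - g (sdigits s (snd v)))"
            unfolding f_def TV_diagx[OF s0 vw(2) False] by simp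
          also have "cmod \<dots> \<le> \<epsilon> k + \<epsilon> k"
            using E1[of k v v] E4[of k] by (intro order_trans[OF norm_triangle_ineq] add_mono) (auto simp: norm_minus_commute)
          finally show "cmod (T v v - g (sdigits s (snd v))) \<le> 2 * \<epsilon> k" by simp
        qed
        then show ?thesis using vw False by (simp add: TV_entry[OF s0] dg_def)
      qed
    qed
  qed
  then show ?thesis using G by blast
qed

lemma TVimg_closed:
  assumes s: "s \<ge> 2" shows "cstar_closed s (TV s ` CXV s)"
proof -
  have s0: "s > 0" using s by simp
  show ?thesis unfolding cstar_closed_def
  proof (intro conjI ballI allI impI)
    show "TV s ` CXV s \<subseteq> bop s" using TV_bop[OF s0] by blast
    show "mzero \<in> TV s ` CXV s" using TV_zero[OF s0] CXV_zero by (metis image_eqI)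
    fix S T assume "S \<in> TV s ` CXV s" "T \<in> TV s ` CXV s"
    then obtain F G where F: "F \<in> CXV s" "S = TV s F" and G: "G \<in> CXV s" "T = TV s G" by blast
    show "madd S T \<in> TV s ` CXV s" using TV_padd[OF s0] CXV_padd[OF F(1) G(1)] F G by (metis image_eqI)
    show "mmult S T \<in> TV s ` CXV s" using TV_pmul[OF s0] CXV_pmul[OF F(1) G(1)] F G by (metis image_eqI)
  next
    fix c T assume "T \<in> TV s ` CXV s"
    then obtain F where F: "F \<in> CXV s" "T = TV s F" by blast
    show "mscale c T \<in> TV s ` CXV s" using TV_pscale[OF s0] CXV_pscale[OF F(1)] F by (metis image_eqI)
  next
    fix T assume "T \<in> TV s ` CXV s"
    then obtain F where F: "F \<in> CXV s" "T = TV s F" by blast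
    show "madj T \<in> TV s ` CXV s" using TV_pcnj[OF s0] CXV_pcnj[OF F(1)] F by (metis image_eqI)
  next
    fix X T assume X: "\<forall>k. X k \<in> TV s ` CXV s" and T: "T \<in> bop s" and lim: "(\<lambda>k. opnorm (mdiff (X k) T)) \<longlonglongrightarrow> 0"
    have "\<forall>k. \<exists>F. F \<in> CXV s \<and> X k = TV s F" using X by blast
    then obtain F where F': "\<forall>k. F k \<in> CXV s \<and> X k = TV s (F k)" by (rule choice[THEN exE]) blast
    then have F: "\<And>k. F k \<in> CXV s" "\<And>k. X k = TV s (F k)" by auto
    show "T \<in> TV s ` CXV s" using TV_limit[OF s F(1) T] lim F(2) by simp
  qed
qed

lemma BV_eq:
  assumes s: "s \<ge> 2" shows "BV s = TV s ` CXV s"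
proof
  have s0: "s > 0" using s by simp
  show "BV s \<subseteq> TV s ` CXV s" unfolding BV_def
  proof (rule cstar_gen_sub[OF TVimg_closed[OF s]])
    show "Mop s ` CZs s \<union> range (Pn s) \<subseteq> TV s ` CXV s"
      using Mop_TV[OF s0] Pn_TV[OF s0] by (auto intro!: image_eqI)
  qed
  show "TV s ` CXV s \<subseteq> BV s" using TV_in_BV[OF s0] by blast
qed

definition up :: "nat \<Rightarrow> nat \<Rightarrow> nat \<times> nat \<Rightarrow> nat \<times> nat" where
  "up s k v = (fst v + k, s ^ k * snd v)"
definition dn :: "nat \<Rightarrow> nat \<Rightarrow> nat \<times> nat \<Rightarrow> nat \<times> nat" where
  "dn s k v = (fst v - k, snd v div s ^ k)"

lemma up_0[simp]: "up s 0 v = v" by (simp add: up_def)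
lemma up_up: "up s a (up s b v) = up s (a + b) v"
  by (simp add: up_def power_add algebra_simps)
lemma fst_up[simp]: "fst (up s k v) = fst v + k" by (simp add: up_def)
lemma snd_up[simp]: "snd (up s k v) = s ^ k * snd v" by (simp add: up_def)
lemma up_inj: "s > 0 \<Longrightarrow> up s k v = up s k v' \<Longrightarrow> v = v'"
  by (simp add: up_def prod_eq_iff)
lemma up_Vset: "s > 0 \<Longrightarrow> v \<in> Vset s \<Longrightarrow> up s k v \<in> Vset s"
  by (simp add: Vset_iff power_add mult.commute)
lemma dn_up[simp]: "s > 0 \<Longrightarrow> dn s k (up s k v) = v"
  by (simp add: up_def dn_def)
lemma up_dn: "s > 0 \<Longrightarrow> k \<le> fst w \<Longrightarrow> s ^ k dvd snd w \<Longrightarrow> up s k (dn s k w) = w"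
  by (simp add: up_def dn_def prod_eq_iff)
lemma dn_Vset:
  assumes s: "s > 0" and w: "w \<in> Vset s" and k: "k \<le> fst w" and d: "s ^ k dvd snd w"
  shows "dn s k w \<in> Vset s"
proof -
  obtain q where q: "snd w = s ^ k * q" using d by blast
  have "s ^ k * q < s ^ k * s ^ (fst w - k)" using w q k by (simp add: Vset_iff power_add[symmetric])
  then have "q < s ^ (fst w - k)" by simp
  then show ?thesis using s q by (simp add: dn_def Vset_iff)
qed
lemma up_char: assumes s: "s > 0" shows "(\<exists>u\<in>Vset s. w = up s k u) \<longleftrightarrow> (w \<in> Vset s \<and> k \<le> fst w \<and> s ^ k dvd snd w)"
proof
  assume "\<exists>u\<in>Vset s. w = up s k u"
  then obtain u where "u \<in> Vset s" "w = up s k u" by blast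
  then show "w \<in> Vset s \<and> k \<le> fst w \<and> s ^ k dvd snd w" using up_Vset[OF s] by auto
next
  assume a: "w \<in> Vset s \<and> k \<le> fst w \<and> s ^ k dvd snd w"
  then show "\<exists>u\<in>Vset s. w = up s k u" using dn_Vset[OF s] up_dn[OF s] by metis
qed

definition ins :: "nat \<Rightarrow> (nat \<Rightarrow> nat) \<Rightarrow> (nat \<Rightarrow> nat)" where
  "ins l a = (\<lambda>k. if k < l then 0 else a (k - l))"
definition drp :: "nat \<Rightarrow> (nat \<Rightarrow> nat) \<Rightarrow> (nat \<Rightarrow> nat)" where
  "drp l a = (\<lambda>k. a (k + l))"

lemma sdig_mul: assumes s: "s > 0" shows "sdigits s (s ^ l * x) = ins l (sdigits s x)"
proof
  fix k
  show "sdigits s (s ^ l * x) k = ins l (sdigits s x) k"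
  proof (cases "k < l")
    case True
    have e: "s ^ l = s ^ k * (s * s ^ (l - k - 1))"
    proof -
      have "l = k + (Suc (l - k - 1))" using True by simp
      then have "s ^ l = s ^ k * s ^ (Suc (l - k - 1))" by (metis power_add)
      then show ?thesis by simp
    qed
    have "s ^ l * x div s ^ k = s * (s ^ (l - k - 1) * x)"
      unfolding e using s by (simp add: mult.assoc)
    then show ?thesis using True by (simp add: sdigits_def ins_def)
  next
    case False
    have e: "s ^ k = s ^ l * s ^ (k - l)" using False by (metis le_add_diff_inverse not_less power_add)
    have "s ^ l * x div s ^ k = x div s ^ (k - l)" unfolding e using s by simp
    then show ?thesis using False by (simp add: sdigits_def ins_def)
  qed
qed

lemma sdig_div: "sdigits s (x div s ^ l) = drp l (sdigits s x)"
proof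
  fix k
  have "x div s ^ l div s ^ k = x div (s ^ l * s ^ k)" by (rule div_mult2_eq[symmetric])
  also have "s ^ l * s ^ k = s ^ (k + l)" by (simp add: power_add)
  finally show "sdigits s (x div s ^ l) k = drp l (sdigits s x) k" by (simp add: sdigits_def drp_def)
qed

lemma dvd_digits: assumes s: "s > 0" shows "(s ^ l dvd x) \<longleftrightarrow> (\<forall>k<l. sdigits s x k = 0)"
proof (induction l)
  case 0 then show ?case by simp
next
  case (Suc l)
  have m: "x mod (s ^ l * s) = s ^ l * (x div s ^ l mod s) + x mod s ^ l" by (rule mod_mult2_eq)
  have "s ^ Suc l dvd x \<longleftrightarrow> x mod (s ^ l * s) = 0" by (simp only: dvd_eq_mod_eq_0 power_Suc2)
  also have "\<dots> \<longleftrightarrow> x div s ^ l mod s = 0 \<and> x mod s ^ l = 0" unfolding m using s by simp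
  also have "\<dots> \<longleftrightarrow> (\<forall>k<Suc l. sdigits s x k = 0)"
    using Suc by (auto simp: dvd_eq_mod_eq_0 sdigits_def less_Suc_eq)
  finally show ?case .
qed

lemma ins_Zs: "s > 0 \<Longrightarrow> a \<in> Zs s \<Longrightarrow> ins l a \<in> Zs s" by (simp add: Zs_def ins_def)
lemma drp_Zs: "a \<in> Zs s \<Longrightarrow> drp l a \<in> Zs s" by (simp add: Zs_def drp_def)
lemma proj_cont: "continuous_on S (\<lambda>a::nat\<Rightarrow>nat. a i)"
  by (rule continuous_on_subset[OF continuous_on_product_coordinates]) simp
lemma proj_comp_cont: "continuous_on S (\<lambda>a::nat\<Rightarrow>nat. (g :: nat \<Rightarrow> 'b::topological_space) (a i))"
  by (rule continuous_on_compose2[OF Topological_Spaces.continuous_on_discrete proj_cont, where t=UNIV]) auto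

lemma ins_cont: "continuous_on S (ins l)"
proof (rule continuous_on_coordinatewise_then_product)
  fix k show "continuous_on S (\<lambda>a. ins l a k)"
    by (cases "k < l") (simp_all add: ins_def proj_cont)
qed
lemma drp_cont: "continuous_on S (drp l)"
  by (rule continuous_on_coordinatewise_then_product) (simp add: drp_def proj_cont)

definition Cls :: "nat \<Rightarrow> (nat \<times> nat \<Rightarrow> complex) set" where
  "Cls s = {d. \<exists>F\<in>CXV s. \<forall>v\<in>Vset s. d v = dg s F v}"

lemma Cls_bounded: "d \<in> Cls s \<Longrightarrow> \<exists>B\<ge>0. \<forall>v\<in>Vset s. cmod (d v) \<le> B"
  unfolding Cls_def using dg_bounded by fastforce

lemma dg_padd: "dg s (padd F G) v = dg s F v + dg s G v" by (simp add: dg_def padd_def)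
lemma dg_pmul: "dg s (pmul F G) v = dg s F v * dg s G v" by (simp add: dg_def pmul_def)
lemma dg_pscale: "dg s (pscale c F) v = c * dg s F v" by (simp add: dg_def pscale_def)
lemma dg_pcnj: "dg s (pcnj F) v = cnj (dg s F v)" by (simp add: dg_def pcnj_def)

lemma Cls_add: assumes "d \<in> Cls s" "e \<in> Cls s" shows "(\<lambda>v. d v + e v) \<in> Cls s"
proof -
  obtain F G where "F \<in> CXV s" "\<forall>v\<in>Vset s. d v = dg s F v" "G \<in> CXV s" "\<forall>v\<in>Vset s. e v = dg s G v"
    using assms unfolding Cls_def by blast
  then show ?thesis unfolding Cls_def by (intro CollectI bexI[of _ "padd F G"] CXV_padd) (simp_all add: dg_padd)
qed
lemma Cls_mul: assumes "d \<in> Cls s" "e \<in> Cls s" shows "(\<lambda>v. d v * e v) \<in> Cls s"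
proof -
  obtain F G where "F \<in> CXV s" "\<forall>v\<in>Vset s. d v = dg s F v" "G \<in> CXV s" "\<forall>v\<in>Vset s. e v = dg s G v"
    using assms unfolding Cls_def by blast
  then show ?thesis unfolding Cls_def by (intro CollectI bexI[of _ "pmul F G"] CXV_pmul) (simp_all add: dg_pmul)
qed
lemma Cls_scale: assumes "d \<in> Cls s" shows "(\<lambda>v. c * d v) \<in> Cls s"
proof -
  obtain F where "F \<in> CXV s" "\<forall>v\<in>Vset s. d v = dg s F v"
    using assms unfolding Cls_def by blast
  then show ?thesis unfolding Cls_def by (intro CollectI bexI[of _ "pscale c F"] CXV_pscale) (simp_all add: dg_pscale)
qed
lemma Cls_cnj: assumes "d \<in> Cls s" shows "(\<lambda>v. cnj (d v)) \<in> Cls s"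
proof -
  obtain F where "F \<in> CXV s" "\<forall>v\<in>Vset s. d v = dg s F v"
    using assms unfolding Cls_def by blast
  then show ?thesis unfolding Cls_def by (intro CollectI bexI[of _ "pcnj F"] CXV_pcnj) (simp_all add: dg_pcnj)
qed
lemma Cls_zero: "(\<lambda>v. 0) \<in> Cls s"
  unfolding Cls_def by (auto intro!: bexI[OF _ CXV_zero] simp: dg_def)
lemma Cls_one: assumes s: "s > 0" shows "(\<lambda>v. 1) \<in> Cls s"
proof -
  define F where "F = ((\<lambda>a. if a \<in> Zs s then 1 else 0) :: (nat \<Rightarrow> nat) \<Rightarrow> complex, (\<lambda>n. 1) :: nat \<Rightarrow> complex)"
  have "F \<in> CXV s"
  proof (rule CXV_I)
    show "continuous_on (Zs s) (fst F)" unfolding F_def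
      by (rule continuous_on_cong[THEN iffD1, OF refl _ continuous_on_const[of _ 1]]) auto
  qed (use sdigits_Zs[OF s] in \<open>auto simp: F_def\<close>)
  moreover have "\<forall>v\<in>Vset s. 1 = dg s F v" using sdigits_Zs[OF s] by (auto simp: F_def dg_def)
  ultimately show ?thesis unfolding Cls_def by blast
qed
lemma Cls_Mop: assumes s: "s > 0" and f: "f \<in> CZs s" shows "(\<lambda>v. f (sdigits s (snd v))) \<in> Cls s"
  unfolding Cls_def using Mop_TV[OF s f] by (auto intro!: bexI[of _ "(f, \<lambda>n. f (sdigits s 0))"] simp: dg_def sdigits_0)

lemma Cls_up: assumes s: "s > 0" and d: "d \<in> Cls s" shows "(\<lambda>v. d (up s l v)) \<in> Cls s"
proof -
  obtain F where F: "F \<in> CXV s" and dF: "\<forall>v\<in>Vset s. d v = dg s F v" using d unfolding Cls_def by blast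
  define G where "G = ((\<lambda>a. if a \<in> Zs s then fst F (ins l a) else 0), (\<lambda>n. snd F (n + l)))"
  have G: "G \<in> CXV s"
  proof (rule CXV_I)
    have "continuous_on (Zs s) (\<lambda>a. fst F (ins l a))"
      using CXV_D[OF F] ins_Zs[OF s] by (intro continuous_on_compose2[OF _ ins_cont]) auto
    then show "continuous_on (Zs s) (fst G)" unfolding G_def
      by (rule continuous_on_cong[THEN iffD1, OF refl, rotated]) auto
    have "ins l (sdigits s 0) = sdigits s 0" by (simp add: ins_def sdigits_0)
    then show "snd G \<longlonglongrightarrow> fst G (sdigits s 0)"
      unfolding G_def using CXV_D[OF F] sdigits_Zs[OF s] by (auto intro: LIMSEQ_ignore_initial_segment)
  qed (simp add: G_def)
  have "d (up s l v) = dg s G v" if v: "v \<in> Vset s" for v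
  proof -
    have "d (up s l v) = dg s F (up s l v)" using dF up_Vset[OF s v] by blast
    also have "\<dots> = dg s G v" using s sdigits_Zs[OF s] by (simp add: dg_def G_def sdig_mul add.commute ins_Zs)
    finally show ?thesis .
  qed
  then show ?thesis unfolding Cls_def using G by blast
qed

definition psi :: "nat \<Rightarrow> nat \<Rightarrow> (nat \<times> nat \<Rightarrow> complex) \<Rightarrow> (nat \<times> nat \<Rightarrow> complex)" where
  "psi s l D w = (if l \<le> fst w \<and> s ^ l dvd snd w then D (dn s l w) else 0)"

lemma Cls_psi: assumes s: "s > 0" and d: "d \<in> Cls s" shows "psi s l d \<in> Cls s"
proof -
  obtain F where F: "F \<in> CXV s" and dF: "\<forall>v\<in>Vset s. d v = dg s F v" using d unfolding Cls_def by blast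
  define chi where "chi a = (\<Prod>k<l. if a k = 0 then 1 else (0::complex))" for a :: "nat \<Rightarrow> nat"
  have chi: "chi a = (if \<forall>k<l. a k = 0 then 1 else 0)" for a
    unfolding chi_def by (induction l) (auto simp: less_Suc_eq)
  define G where "G = ((\<lambda>a. if a \<in> Zs s then chi a * fst F (drp l a) else 0), (\<lambda>n. if l \<le> n then snd F (n - l) else 0))"
  have G: "G \<in> CXV s"
  proof (rule CXV_I)
    have c1: "continuous_on (Zs s) chi" unfolding chi_def
    proof (intro continuous_on_prod)
      fix k show "continuous_on (Zs s) (\<lambda>a. if a k = 0 then 1 else (0::complex))"
        using proj_comp_cont[of "Zs s" "\<lambda>n. if n = 0 then 1 else (0::complex)" k] by simp
    qed
    have c2: "continuous_on (Zs s) (\<lambda>a. fst F (drp l a))"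
      using CXV_D[OF F] drp_Zs by (intro continuous_on_compose2[OF _ drp_cont]) auto
    have "continuous_on (Zs s) (\<lambda>a. chi a * fst F (drp l a))" by (intro continuous_on_mult c1 c2)
    then show "continuous_on (Zs s) (fst G)" unfolding G_def
      by (rule continuous_on_cong[THEN iffD1, OF refl, rotated]) auto
    have "(\<lambda>n. snd G (n + l)) \<longlonglongrightarrow> fst F (sdigits s 0)" unfolding G_def using CXV_D[OF F] by simp
    moreover have "fst G (sdigits s 0) = fst F (sdigits s 0)"
      unfolding G_def using s by (simp add: chi sdigits_0 drp_def Zs_def)
    ultimately show "snd G \<longlonglongrightarrow> fst G (sdigits s 0)" by (simp add: LIMSEQ_offset)
  qed (simp add: G_def)
  have "psi s l d v = dg s G v" if v: "v \<in> Vset s" for v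
  proof (cases "snd v = 0")
    case True
    then have "l \<le> fst v \<Longrightarrow> dn s l v \<in> Vset s" using dn_Vset[OF s v] by simp
    then show ?thesis using True dF by (auto simp: psi_def dg_def G_def dn_def)
  next
    case False
    have sZ: "sdigits s (snd v) \<in> Zs s" by (rule sdigits_Zs[OF s])
    show ?thesis
    proof (cases "s ^ l dvd snd v")
      case dv: True
      then have "s ^ l \<le> snd v" using False by (simp add: dvd_imp_le)
      then have "s ^ l < s ^ fst v" using v by (simp add: Vset_iff)
      then have lf: "l \<le> fst v" using s by (metis linorder_not_less nat_power_less_imp_less order.asym)
      have dV: "dn s l v \<in> Vset s" by (rule dn_Vset[OF s v lf dv])
      have nz: "snd v div s ^ l \<noteq> 0" using dv False by auto
      have "psi s l d v = dg s F (dn s l v)" using lf dv dF dV by (simp add: psi_def)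
      also have "\<dots> = fst F (drp l (sdigits s (snd v)))" using nz by (simp add: dg_def dn_def sdig_div)
      also have "\<dots> = dg s G v" using False dv sZ dvd_digits[OF s] by (simp add: dg_def G_def chi)
      finally show ?thesis .
    next
      case ndv: False
      then show ?thesis using False sZ dvd_digits[OF s, of l "snd v"] by (auto simp: psi_def dg_def G_def chi)
    qed
  qed
  then show ?thesis unfolding Cls_def using G by blast
qed

definition shU :: "nat \<Rightarrow> nat \<Rightarrow> (nat \<times> nat \<Rightarrow> complex) \<Rightarrow> mat" where
  "shU s k d = (\<lambda>v w. if w \<in> Vset s \<and> v = up s k w then d w else 0)"
definition shD :: "nat \<Rightarrow> nat \<Rightarrow> (nat \<times> nat \<Rightarrow> complex) \<Rightarrow> mat" where
  "shD s k d = (\<lambda>v w. if v \<in> Vset s \<and> w = up s k v then d v else 0)"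

lemma P1: assumes s: "s > 0"
  shows "mmult (shU s j d) (shU s l e) = shU s (j + l) (\<lambda>w. d (up s l w) * e w)"
proof (intro ext)
  fix v w
  have "mmult (shU s j d) (shU s l e) v w = shU s j d v (up s l w) * shU s l e (up s l w) w"
    unfolding mmult_def by (rule infsum_single) (auto simp: shU_def)
  then show "mmult (shU s j d) (shU s l e) v w = shU s (j + l) (\<lambda>w. d (up s l w) * e w) v w"
    using up_Vset[OF s] by (auto simp: shU_def up_up add.commute)
qed

lemma P2: assumes s: "s > 0"
  shows "mmult (shD s j d) (shD s l e) = shD s (j + l) (\<lambda>v. d v * e (up s j v))"
proof (intro ext)
  fix v w
  have "mmult (shD s j d) (shD s l e) v w = shD s j d v (up s j v) * shD s l e (up s j v) w"
    unfolding mmult_def by (rule infsum_single) (auto simp: shD_def)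
  then show "mmult (shD s j d) (shD s l e) v w = shD s (j + l) (\<lambda>v. d v * e (up s j v)) v w"
    using up_Vset[OF s] by (auto simp: shD_def up_up add.commute)
qed

lemma P3a: assumes s: "s > 0" and jl: "l \<le> j"
  shows "mmult (shU s j d) (shD s l e) = shU s (j - l) (psi s l (\<lambda>u. d u * e u))"
proof (intro ext)
  fix v w
  have "mmult (shU s j d) (shD s l e) v w = shU s j d v (dn s l w) * shD s l e (dn s l w) w"
    unfolding mmult_def by (rule infsum_single) (auto simp: shD_def s)
  also have "\<dots> = shU s (j - l) (psi s l (\<lambda>u. d u * e u)) v w"
  proof (cases "w \<in> Vset s \<and> l \<le> fst w \<and> s ^ l dvd snd w")
    case True
    then have dV: "dn s l w \<in> Vset s" and ud: "up s l (dn s l w) = w" using dn_Vset[OF s] up_dn[OF s] by auto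
    have "up s j (dn s l w) = up s (j - l) w" using ud jl by (metis up_up le_add_diff_inverse2)
    then show ?thesis using True dV ud by (simp add: shU_def shD_def psi_def)
  next
    case False
    have "\<not> (\<exists>u\<in>Vset s. w = up s l u)" using False up_char[OF s] by blast
    then have "\<not> (dn s l w \<in> Vset s \<and> w = up s l (dn s l w))" by blast
    then show ?thesis using False by (auto simp: shU_def shD_def psi_def)
  qed
  finally show "mmult (shU s j d) (shD s l e) v w = shU s (j - l) (psi s l (\<lambda>u. d u * e u)) v w" .
qed

lemma P3b: assumes s: "s > 0" and jl: "j < l"
  shows "mmult (shU s j d) (shD s l e) = shD s (l - j) (psi s j (\<lambda>u. d u * e u))"
proof (intro ext)
  fix v w
  have "mmult (shU s j d) (shD s l e) v w = shU s j d v (dn s j v) * shD s l e (dn s j v) w"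
    unfolding mmult_def by (rule infsum_single) (auto simp: shU_def s)
  also have "\<dots> = shD s (l - j) (psi s j (\<lambda>u. d u * e u)) v w"
  proof (cases "v \<in> Vset s \<and> j \<le> fst v \<and> s ^ j dvd snd v")
    case True
    then have dV: "dn s j v \<in> Vset s" and ud: "up s j (dn s j v) = v" using dn_Vset[OF s] up_dn[OF s] by auto
    have "up s l (dn s j v) = up s (l - j) v" using ud jl by (metis up_up less_imp_le le_add_diff_inverse2)
    then show ?thesis using True dV ud by (simp add: shU_def shD_def psi_def)
  next
    case False
    have "\<not> (\<exists>u\<in>Vset s. v = up s j u)" using False up_char[OF s] by blast
    then have "\<not> (dn s j v \<in> Vset s \<and> v = up s j (dn s j v))" by blast
    then show ?thesis using False by (auto simp: shU_def shD_def psi_def)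
  qed
  finally show "mmult (shU s j d) (shD s l e) v w = shD s (l - j) (psi s j (\<lambda>u. d u * e u)) v w" .
qed

lemma P4a: assumes s: "s > 0" and jl: "j \<le> l"
  shows "mmult (shD s j d) (shU s l e) = shU s (l - j) (\<lambda>w. d (up s (l - j) w) * e w)"
proof (intro ext)
  fix v w
  have "mmult (shD s j d) (shU s l e) v w = shD s j d v (up s j v) * shU s l e (up s j v) w"
    unfolding mmult_def by (rule infsum_single) (auto simp: shD_def)
  also have "\<dots> = shU s (l - j) (\<lambda>w. d (up s (l - j) w) * e w) v w"
  proof -
    have ul: "up s l w = up s j (up s (l - j) w)" using jl by (simp add: up_up)
    have "(up s j v = up s l w) \<longleftrightarrow> v = up s (l - j) w" unfolding ul using up_inj[OF s] by blast
    then show ?thesis using up_Vset[OF s] by (auto simp: shU_def shD_def)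
  qed
  finally show "mmult (shD s j d) (shU s l e) v w = shU s (l - j) (\<lambda>w. d (up s (l - j) w) * e w) v w" .
qed

lemma P4b: assumes s: "s > 0" and jl: "l < j"
  shows "mmult (shD s j d) (shU s l e) = shD s (j - l) (\<lambda>v. d v * e (up s (j - l) v))"
proof (intro ext)
  fix v w
  have "mmult (shD s j d) (shU s l e) v w = shD s j d v (up s j v) * shU s l e (up s j v) w"
    unfolding mmult_def by (rule infsum_single) (auto simp: shD_def)
  also have "\<dots> = shD s (j - l) (\<lambda>v. d v * e (up s (j - l) v)) v w"
  proof -
    have uj: "up s j v = up s l (up s (j - l) v)" using jl by (simp add: up_up)
    have "(up s j v = up s l w) \<longleftrightarrow> w = up s (j - l) v" unfolding uj using up_inj[OF s] by blast
    then show ?thesis using up_Vset[OF s] by (auto simp: shU_def shD_def)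
  qed
  finally show "mmult (shD s j d) (shU s l e) v w = shD s (j - l) (\<lambda>v. d v * e (up s (j - l) v)) v w" .
qed

lemma adj_shU: "madj (shU s k d) = shD s k (\<lambda>v. cnj (d v))"
  by (auto simp: fun_eq_iff madj_def shU_def shD_def)
lemma adj_shD: "madj (shD s k d) = shU s k (\<lambda>v. cnj (d v))"
  by (auto simp: fun_eq_iff madj_def shU_def shD_def)
lemma scale_shU: "mscale c (shU s k d) = shU s k (\<lambda>v. c * d v)"
  by (auto simp: fun_eq_iff mscale_def shU_def)
lemma scale_shD: "mscale c (shD s k d) = shD s k (\<lambda>v. c * d v)"
  by (auto simp: fun_eq_iff mscale_def shD_def)

lemma mE_shU: "mE (shU s k d) = (if k = 0 then shU s 0 d else mzero)"
  by (auto simp: fun_eq_iff mE_def shU_def mzero_def up_def)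
lemma mE_shD: "mE (shD s k d) = (if k = 0 then shU s 0 d else mzero)"
  by (auto simp: fun_eq_iff mE_def shU_def shD_def mzero_def up_def)
lemma mE_add: "mE (madd A B) = madd (mE A) (mE B)"
  by (auto simp: fun_eq_iff mE_def madd_def)

lemma shU0_TV: assumes s: "s > 0" and d: "d \<in> Cls s" shows "shU s 0 d \<in> TV s ` CXV s"
proof -
  obtain F where F: "F \<in> CXV s" and dF: "\<forall>v\<in>Vset s. d v = dg s F v" using d unfolding Cls_def by blast
  have "shU s 0 d = TV s F" using dF by (auto simp: fun_eq_iff shU_def TV_entry[OF s])
  then show ?thesis using F by blast
qed

lemma shU_bop: assumes s: "s > 0" and d: "d \<in> Cls s" shows "shU s k d \<in> bop s"
proof -
  obtain B where B: "B \<ge> 0" "\<forall>v\<in>Vset s. cmod (d v) \<le> B" using Cls_bounded[OF d] by blast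
  have mb: "mbound (shU s k d) B"
  proof (rule mbound_graph[where \<pi>="dn s k"])
    show "cmod (shU s k d v w) \<le> B" for v w using B by (auto simp: shU_def)
  qed (use B s in \<open>auto simp: shU_def split: if_splits\<close>)
  show ?thesis by (rule mbound_bopI'[OF mb]) (use up_Vset[OF s] in \<open>auto simp: shU_def\<close>)
qed

lemma shD_bop: assumes s: "s > 0" and d: "d \<in> Cls s" shows "shD s k d \<in> bop s"
proof -
  have "madj (shU s k (\<lambda>v. cnj (d v))) \<in> bop s" using shU_bop[OF s Cls_cnj[OF d]] by (rule bop_adj)
  then show ?thesis by (simp add: adj_shU)
qed

lemma mmult_add_left: "S1 \<in> bop s \<Longrightarrow> S2 \<in> bop s \<Longrightarrow> T \<in> bop s \<Longrightarrow>
  mmult (madd S1 S2) T = madd (mmult S1 T) (mmult S2 T)"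
  unfolding mmult_def madd_def
  by (auto simp: fun_eq_iff distrib_right intro!: infsum_add bop_summable)

lemma mmult_add_right: "S \<in> bop s \<Longrightarrow> T1 \<in> bop s \<Longrightarrow> T2 \<in> bop s \<Longrightarrow>
  mmult S (madd T1 T2) = madd (mmult S T1) (mmult S T2)"
  unfolding mmult_def madd_def
  by (auto simp: fun_eq_iff distrib_left intro!: infsum_add bop_summable)

lemma mmult_scale_left: "mmult (mscale c S) T = mscale c (mmult S T)"
proof (intro ext)
  fix v w
  show "mmult (mscale c S) T v w = mscale c (mmult S T) v w"
    unfolding mmult_def mscale_def
  proof (cases "(\<lambda>u. S v u * T u w) summable_on UNIV")
    case True then show "(\<Sum>\<^sub>\<infinity>u. c * S v u * T u w) = c * (\<Sum>\<^sub>\<infinity>u. S v u * T u w)"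
      by (simp add: infsum_cmult_right mult.assoc)
  next
    case False
    show "(\<Sum>\<^sub>\<infinity>u. c * S v u * T u w) = c * (\<Sum>\<^sub>\<infinity>u. S v u * T u w)"
    proof (cases "c = 0")
      case False
      have "\<not> (\<lambda>u. c * (S v u * T u w)) summable_on UNIV"
      proof
        assume "(\<lambda>u. c * (S v u * T u w)) summable_on UNIV"
        then have "(\<lambda>u. inverse c * (c * (S v u * T u w))) summable_on UNIV" by (rule summable_on_cmult_right)
        moreover have "(\<lambda>u. inverse c * (c * (S v u * T u w))) = (\<lambda>u. S v u * T u w)"
          using \<open>c \<noteq> 0\<close> by (simp add: mult.assoc[symmetric])
        ultimately show False using \<open>\<not> (\<lambda>u. S v u * T u w) summable_on UNIV\<close> by simp
      qed
      then show ?thesis using \<open>\<not> (\<lambda>u. S v u * T u w) summable_on UNIV\<close> by (simp add: infsum_not_exists mult.assoc)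
    qed simp
  qed
qed

lemma mmult_scale_right: "mmult S (mscale c T) = mscale c (mmult S T)"
proof -
  have "mmult S (mscale c T) = mmult (mscale c S) T"
    by (simp add: mmult_def mscale_def mult_ac)
  then show ?thesis by (simp add: mmult_scale_left)
qed

lemma mult_diff_split:
  assumes "X \<in> bop s" "S \<in> bop s" "Y \<in> bop s" "T \<in> bop s"
  shows "mdiff (mmult X Y) (mmult S T) = madd (mmult (mdiff X S) Y) (mmult S (mdiff Y T))"
proof -
  have "mmult (mdiff X S) Y = madd (mmult X Y) (mscale (-1) (mmult S Y))"
    unfolding mdiff_eq using assms by (simp add: mmult_add_left bop_scale mmult_scale_left)
  moreover have "mmult S (mdiff Y T) = madd (mmult S Y) (mscale (-1) (mmult S T))"
    unfolding mdiff_eq using assms by (simp add: mmult_add_right bop_scale mmult_scale_right)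
  ultimately show ?thesis by (simp add: fun_eq_iff mdiff_def madd_def mscale_def)
qed

inductive_set Pp :: "nat \<Rightarrow> mat set" for s where
  PU: "d \<in> Cls s \<Longrightarrow> shU s k d \<in> Pp s"
| PD: "d \<in> Cls s \<Longrightarrow> shD s k d \<in> Pp s"
| PA: "A \<in> Pp s \<Longrightarrow> B \<in> Pp s \<Longrightarrow> madd A B \<in> Pp s"

lemma Pp_bop: assumes s: "s > 0" shows "A \<in> Pp s \<Longrightarrow> A \<in> bop s"
  by (induction A rule: Pp.induct) (auto intro: shU_bop[OF s] shD_bop[OF s] bop_add)

lemma Pp_adj: "A \<in> Pp s \<Longrightarrow> madj A \<in> Pp s"
proof (induction A rule: Pp.induct)
  case (PU d k) then show ?case by (simp add: adj_shU Cls_cnj Pp.PD)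
next
  case (PD d k) then show ?case by (simp add: adj_shD Cls_cnj Pp.PU)
next
  case (PA A B)
  have "madj (madd A B) = madd (madj A) (madj B)" by (simp add: fun_eq_iff madj_def madd_def)
  then show ?case using PA by (simp add: Pp.PA)
qed

lemma Pp_scale: "A \<in> Pp s \<Longrightarrow> mscale c A \<in> Pp s"
proof (induction A rule: Pp.induct)
  case (PU d k) then show ?case by (simp add: scale_shU Cls_scale Pp.PU)
next
  case (PD d k) then show ?case by (simp add: scale_shD Cls_scale Pp.PD)
next
  case (PA A B)
  have "mscale c (madd A B) = madd (mscale c A) (mscale c B)" by (simp add: fun_eq_iff mscale_def madd_def distrib_left)
  then show ?case using PA by (simp add: Pp.PA)
qed

definition shp :: "nat \<Rightarrow> mat \<Rightarrow> bool" where
  "shp s X \<longleftrightarrow> (\<exists>k d. d \<in> Cls s \<and> (X = shU s k d \<or> X = shD s k d))"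

lemma shp_Pp: "shp s X \<Longrightarrow> X \<in> Pp s"
  unfolding shp_def by (auto intro: Pp.PU Pp.PD)

lemma shp_mult: assumes s: "s > 0" and X: "shp s X" and Y: "shp s Y" shows "shp s (mmult X Y)"
proof -
  obtain j d where d: "d \<in> Cls s" and Xf: "X = shU s j d \<or> X = shD s j d" using X unfolding shp_def by blast
  obtain l e where e: "e \<in> Cls s" and Yf: "Y = shU s l e \<or> Y = shD s l e" using Y unfolding shp_def by blast
  have de: "(\<lambda>u. d u * e u) \<in> Cls s" by (rule Cls_mul[OF d e])
  have c1: "(\<lambda>w. d (up s m w) * e w) \<in> Cls s" for m by (rule Cls_mul[OF Cls_up[OF s d] e])
  have c2: "(\<lambda>v. d v * e (up s m v)) \<in> Cls s" for m by (rule Cls_mul[OF d Cls_up[OF s e]])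
  have c3: "psi s m (\<lambda>u. d u * e u) \<in> Cls s" for m by (rule Cls_psi[OF s de])
  show ?thesis
  proof (cases "X = shU s j d")
    case XU: True
    show ?thesis
    proof (cases "Y = shU s l e")
      case True then show ?thesis using XU P1[OF s] c1 unfolding shp_def by metis
    next
      case False
      then have YD: "Y = shD s l e" using Yf by blast
      show ?thesis
      proof (cases "l \<le> j")
        case True then show ?thesis using XU YD P3a[OF s True] c3 unfolding shp_def by metis
      next
        case False then have "j < l" by simp
        then show ?thesis using XU YD P3b[OF s] c3 unfolding shp_def by metis
      qed
    qed
  next
    case False
    then have XD: "X = shD s j d" using Xf by blast
    show ?thesis
    proof (cases "Y = shD s l e")
      case True then show ?thesis using XD P2[OF s] c2 unfolding shp_def by metis
    next
      case False
      then have YU: "Y = shU s l e" using Yf by blast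
      show ?thesis
      proof (cases "j \<le> l")
        case True then show ?thesis using XD YU P4a[OF s True] c1 unfolding shp_def by metis
      next
        case False then have "l < j" by simp
        then show ?thesis using XD YU P4b[OF s] c2 unfolding shp_def by metis
      qed
    qed
  qed
qed

lemma shp_bop: "s > 0 \<Longrightarrow> shp s X \<Longrightarrow> X \<in> bop s"
  using Pp_bop shp_Pp by blast

lemma Pp_mult_shp: assumes s: "s > 0" shows "A \<in> Pp s \<Longrightarrow> shp s Y \<Longrightarrow> mmult A Y \<in> Pp s"
proof (induction A rule: Pp.induct)
  case (PU d k)
  then have "shp s (shU s k d)" unfolding shp_def by blast
  then show ?case using shp_mult[OF s _ PU(2)] shp_Pp by blast
next
  case (PD d k)
  then have "shp s (shD s k d)" unfolding shp_def by blast
  then show ?case using shp_mult[OF s _ PD(2)] shp_Pp by blast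
next
  case (PA A B)
  then show ?case using mmult_add_left[OF Pp_bop[OF s PA(1)] Pp_bop[OF s PA(2)] shp_bop[OF s PA(5)]]
    by (simp add: Pp.PA)
qed

lemma Pp_mult: assumes s: "s > 0" and A: "A \<in> Pp s" shows "B \<in> Pp s \<Longrightarrow> mmult A B \<in> Pp s"
proof (induction B rule: Pp.induct)
  case (PU d k)
  then have "shp s (shU s k d)" unfolding shp_def by blast
  then show ?case using Pp_mult_shp[OF s A] by blast
next
  case (PD d k)
  then have "shp s (shD s k d)" unfolding shp_def by blast
  then show ?case using Pp_mult_shp[OF s A] by blast
next
  case (PA B1 B2)
  then show ?case using mmult_add_right[OF Pp_bop[OF s A] Pp_bop[OF s PA(1)] Pp_bop[OF s PA(2)]]
    by (simp add: Pp.PA)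
qed

lemma mE_Pp: assumes s: "s > 0" shows "A \<in> Pp s \<Longrightarrow> mE A \<in> TV s ` CXV s"
proof (induction A rule: Pp.induct)
  case (PU d k)
  have z: "mzero \<in> TV s ` CXV s" using TV_zero[OF s] CXV_zero by (metis image_eqI)
  show ?case using shU0_TV[OF s PU] z by (simp add: mE_shU)
next
  case (PD d k)
  have z: "mzero \<in> TV s ` CXV s" using TV_zero[OF s] CXV_zero by (metis image_eqI)
  show ?case using shU0_TV[OF s PD] z by (simp add: mE_shD)
next
  case (PA A B)
  then obtain F G where "F \<in> CXV s" "mE A = TV s F" "G \<in> CXV s" "mE B = TV s G" by blast
  then show ?case using TV_padd[OF s] CXV_padd by (metis image_eqI mE_add)
qed

definition Dc :: "nat \<Rightarrow> mat set" where
  "Dc s = {T \<in> bop s. \<exists>X. (\<forall>k. X k \<in> Pp s) \<and> (\<lambda>k. opnorm (mdiff (X k) T)) \<longlonglongrightarrow> 0}"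

lemma to0: "(\<And>k. 0 \<le> a k) \<Longrightarrow> (\<And>k. a k \<le> b k) \<Longrightarrow> b \<longlonglongrightarrow> 0 \<Longrightarrow> a \<longlonglongrightarrow> (0::real)"
  by (rule tendsto_sandwich[of "\<lambda>_. 0" a sequentially b]) auto

lemma Pp_zero: "mzero \<in> Pp s"
proof -
  have "shU s 0 (\<lambda>v. 0) = mzero" by (simp add: fun_eq_iff shU_def mzero_def)
  then show ?thesis using Pp.PU[OF Cls_zero, of s 0] by simp
qed

lemma mdiff_self: "mdiff A A = mzero" by (simp add: fun_eq_iff mdiff_def mzero_def)

lemma Pp_Dc: assumes s: "s > 0" shows "A \<in> Pp s \<Longrightarrow> A \<in> Dc s"
  unfolding Dc_def using Pp_bop[OF s] by (auto simp: mdiff_self opnorm_zero intro!: exI[of _ "\<lambda>k. A"])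

lemma Dc_closed: assumes s: "s > 0" shows "cstar_closed s (Dc s)"
  unfolding cstar_closed_def
proof (intro conjI ballI allI impI)
  show "Dc s \<subseteq> bop s" unfolding Dc_def by blast
  show "mzero \<in> Dc s" by (rule Pp_Dc[OF s Pp_zero])
next
  fix S T assume S: "S \<in> Dc s" and T: "T \<in> Dc s"
  obtain X where X: "\<forall>k. X k \<in> Pp s" "(\<lambda>k. opnorm (mdiff (X k) S)) \<longlonglongrightarrow> 0" and Sb: "S \<in> bop s" using S unfolding Dc_def by blast
  obtain Y where Y: "\<forall>k. Y k \<in> Pp s" "(\<lambda>k. opnorm (mdiff (Y k) T)) \<longlonglongrightarrow> 0" and Tb: "T \<in> bop s" using T unfolding Dc_def by blast
  have Xb: "X k \<in> bop s" and Yb: "Y k \<in> bop s" for k using X Y Pp_bop[OF s] by auto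
  define a where "a k = opnorm (mdiff (X k) S)" for k
  define c where "c k = opnorm (mdiff (Y k) T)" for k
  have a0: "a \<longlonglongrightarrow> 0" and c0: "c \<longlonglongrightarrow> 0" using X Y unfolding a_def c_def by auto
  show "madd S T \<in> Dc s" unfolding Dc_def
  proof (intro CollectI conjI exI[of _ "\<lambda>k. madd (X k) (Y k)"])
    show "madd S T \<in> bop s" by (rule bop_add[OF Sb Tb])
    show "\<forall>k. madd (X k) (Y k) \<in> Pp s" using X Y by (simp add: Pp.PA)
    have e: "mdiff (madd (X k) (Y k)) (madd S T) = madd (mdiff (X k) S) (mdiff (Y k) T)" for k
      by (simp add: fun_eq_iff mdiff_def madd_def)
    show "(\<lambda>k. opnorm (mdiff (madd (X k) (Y k)) (madd S T))) \<longlonglongrightarrow> 0"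
    proof (rule to0)
      show "0 \<le> opnorm (mdiff (madd (X k) (Y k)) (madd S T))" for k
        by (intro opnorm_nonneg[of _ s] bop_diff bop_add Xb Yb Sb Tb)
      show "opnorm (mdiff (madd (X k) (Y k)) (madd S T)) \<le> a k + c k" for k
        unfolding e a_def c_def by (intro opnorm_add[of _ s] bop_diff Xb Yb Sb Tb)
      show "(\<lambda>k. a k + c k) \<longlonglongrightarrow> 0" using tendsto_add[OF a0 c0] by simp
    qed
  qed
  show "mmult S T \<in> Dc s" unfolding Dc_def
  proof (intro CollectI conjI exI[of _ "\<lambda>k. mmult (X k) (Y k)"])
    show "mmult S T \<in> bop s" by (rule bop_mult[OF Sb Tb])
    show "\<forall>k. mmult (X k) (Y k) \<in> Pp s" using X Y Pp_mult[OF s] by blast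
    show "(\<lambda>k. opnorm (mdiff (mmult (X k) (Y k)) (mmult S T))) \<longlonglongrightarrow> 0"
    proof (rule to0)
      show "0 \<le> opnorm (mdiff (mmult (X k) (Y k)) (mmult S T))" for k
        by (intro opnorm_nonneg[of _ s] bop_diff bop_mult Xb Yb Sb Tb)
      show "opnorm (mdiff (mmult (X k) (Y k)) (mmult S T)) \<le> a k * (c k + opnorm T) + opnorm S * c k" for k
      proof -
        have Yk: "opnorm (Y k) \<le> c k + opnorm T"
        proof -
          have "Y k = madd (mdiff (Y k) T) T" by (simp add: fun_eq_iff mdiff_def madd_def)
          then have "opnorm (Y k) = opnorm (madd (mdiff (Y k) T) T)" by simp
          also have "\<dots> \<le> c k + opnorm T" unfolding c_def by (intro opnorm_add[of _ s] bop_diff Yb Tb)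
          finally show ?thesis .
        qed
        have "opnorm (mdiff (mmult (X k) (Y k)) (mmult S T))
            = opnorm (madd (mmult (mdiff (X k) S) (Y k)) (mmult S (mdiff (Y k) T)))"
          by (simp add: mult_diff_split[OF Xb Sb Yb Tb])
        also have "\<dots> \<le> opnorm (mmult (mdiff (X k) S) (Y k)) + opnorm (mmult S (mdiff (Y k) T))"
          by (intro opnorm_add[of _ s] bop_mult bop_diff Xb Yb Sb Tb)
        also have "\<dots> \<le> a k * opnorm (Y k) + opnorm S * c k"
          unfolding a_def c_def by (intro add_mono opnorm_mult[of _ s] bop_diff Xb Yb Sb Tb)
        also have "\<dots> \<le> a k * (c k + opnorm T) + opnorm S * c k"
        proof -
          have "a k \<ge> 0" unfolding a_def by (rule opnorm_nonneg[OF bop_diff[OF Xb Sb]])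
          then show ?thesis using Yk opnorm_nonneg[OF Sb] by (intro add_mono mult_left_mono) auto
        qed
        finally show ?thesis .
      qed
      show "(\<lambda>k. a k * (c k + opnorm T) + opnorm S * c k) \<longlonglongrightarrow> 0"
        using tendsto_add[OF tendsto_mult[OF a0 tendsto_add[OF c0 tendsto_const]] tendsto_mult[OF tendsto_const c0]] by simp
    qed
  qed
next
  fix c T assume T: "T \<in> Dc s"
  obtain X where X: "\<forall>k. X k \<in> Pp s" "(\<lambda>k. opnorm (mdiff (X k) T)) \<longlonglongrightarrow> 0" and Tb: "T \<in> bop s" using T unfolding Dc_def by blast
  have Xb: "X k \<in> bop s" for k using X Pp_bop[OF s] by auto
  show "mscale c T \<in> Dc s" unfolding Dc_def
  proof (intro CollectI conjI exI[of _ "\<lambda>k. mscale c (X k)"])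
    show "mscale c T \<in> bop s" by (rule bop_scale[OF Tb])
    show "\<forall>k. mscale c (X k) \<in> Pp s" using X Pp_scale by blast
    have e: "mdiff (mscale c (X k)) (mscale c T) = mscale c (mdiff (X k) T)" for k
      by (simp add: fun_eq_iff mdiff_def mscale_def algebra_simps)
    show "(\<lambda>k. opnorm (mdiff (mscale c (X k)) (mscale c T))) \<longlonglongrightarrow> 0"
    proof (rule to0)
      show "0 \<le> opnorm (mdiff (mscale c (X k)) (mscale c T))" for k by (intro opnorm_nonneg[of _ s] bop_diff bop_scale Xb Tb)
      show "opnorm (mdiff (mscale c (X k)) (mscale c T)) \<le> cmod c * opnorm (mdiff (X k) T)" for k
        unfolding e by (intro opnorm_scale[of _ s] bop_diff Xb Tb)
      show "(\<lambda>k. cmod c * opnorm (mdiff (X k) T)) \<longlonglongrightarrow> 0" using tendsto_mult[OF tendsto_const X(2)] by simp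
    qed
  qed
next
  fix T assume T: "T \<in> Dc s"
  obtain X where X: "\<forall>k. X k \<in> Pp s" "(\<lambda>k. opnorm (mdiff (X k) T)) \<longlonglongrightarrow> 0" and Tb: "T \<in> bop s" using T unfolding Dc_def by blast
  have Xb: "X k \<in> bop s" for k using X Pp_bop[OF s] by auto
  show "madj T \<in> Dc s" unfolding Dc_def
  proof (intro CollectI conjI exI[of _ "\<lambda>k. madj (X k)"])
    show "madj T \<in> bop s" by (rule bop_adj[OF Tb])
    show "\<forall>k. madj (X k) \<in> Pp s" using X Pp_adj by blast
    have e: "mdiff (madj (X k)) (madj T) = madj (mdiff (X k) T)" for k
      by (simp add: fun_eq_iff mdiff_def madj_def)
    show "(\<lambda>k. opnorm (mdiff (madj (X k)) (madj T))) \<longlonglongrightarrow> 0"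
    proof (rule to0)
      show "0 \<le> opnorm (mdiff (madj (X k)) (madj T))" for k by (intro opnorm_nonneg[of _ s] bop_diff bop_adj Xb Tb)
      show "opnorm (mdiff (madj (X k)) (madj T)) \<le> opnorm (mdiff (X k) T)" for k
        unfolding e by (intro opnorm_adj[of _ s] bop_diff Xb Tb)
      show "(\<lambda>k. opnorm (mdiff (X k) T)) \<longlonglongrightarrow> 0" by (rule X(2))
    qed
  qed
next
  fix X T assume X: "\<forall>k. X k \<in> Dc s" and Tb: "T \<in> bop s" and lim: "(\<lambda>k. opnorm (mdiff (X k) T)) \<longlonglongrightarrow> 0"
  have Xb: "X k \<in> bop s" for k using X unfolding Dc_def by blast
  have "\<forall>k. \<exists>Z. Z \<in> Pp s \<and> opnorm (mdiff Z (X k)) < inverse (real (Suc k))"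
  proof
    fix k
    obtain Y where Y: "\<forall>m. Y m \<in> Pp s" "(\<lambda>m. opnorm (mdiff (Y m) (X k))) \<longlonglongrightarrow> 0" using X unfolding Dc_def by blast
    have "inverse (real (Suc k)) > 0" by simp
    then obtain m where "dist (opnorm (mdiff (Y m) (X k))) 0 < inverse (real (Suc k))"
      using Y(2) unfolding lim_sequentially by blast
    then have "opnorm (mdiff (Y m) (X k)) < inverse (real (Suc k))" by (simp add: dist_real_def abs_less_iff)
    then show "\<exists>Z. Z \<in> Pp s \<and> opnorm (mdiff Z (X k)) < inverse (real (Suc k))" using Y(1) by blast
  qed
  then obtain Z where Z: "\<forall>k. Z k \<in> Pp s \<and> opnorm (mdiff (Z k) (X k)) < inverse (real (Suc k))"
    by (rule choice[THEN exE]) blast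
  have Zb: "Z k \<in> bop s" for k using Z Pp_bop[OF s] by auto
  show "T \<in> Dc s" unfolding Dc_def
  proof (intro CollectI conjI exI[of _ Z])
    show "T \<in> bop s" by (rule Tb)
    show "\<forall>k. Z k \<in> Pp s" using Z by blast
    show "(\<lambda>k. opnorm (mdiff (Z k) T)) \<longlonglongrightarrow> 0"
    proof (rule to0)
      show "0 \<le> opnorm (mdiff (Z k) T)" for k by (intro opnorm_nonneg[of _ s] bop_diff Zb Tb)
      show "opnorm (mdiff (Z k) T) \<le> inverse (real (Suc k)) + opnorm (mdiff (X k) T)" for k
      proof -
        have "opnorm (mdiff (Z k) T) \<le> opnorm (mdiff (Z k) (X k)) + opnorm (mdiff (X k) T)"
          by (rule opnorm_tri[OF Zb Xb Tb])
        moreover have "opnorm (mdiff (Z k) (X k)) < inverse (real (Suc k))" using Z by blast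
        ultimately show ?thesis by linarith
      qed
      show "(\<lambda>k. inverse (real (Suc k)) + opnorm (mdiff (X k) T)) \<longlonglongrightarrow> 0"
        using tendsto_add[OF LIMSEQ_inverse_real_of_nat lim] by simp
    qed
  qed
qed

lemma Vshift_shU: "Vshift s = shU s 1 (\<lambda>v. 1)"
  by (auto simp: fun_eq_iff Vshift_def shU_def up_def)

lemma Mop_shU: "Mop s f = shU s 0 (\<lambda>v. f (sdigits s (snd v)))"
  by (auto simp: fun_eq_iff Mop_def shU_def)

lemma AV_Dc: assumes s: "s > 0" shows "AV s \<subseteq> Dc s"
  unfolding AV_def
proof (rule cstar_gen_sub[OF Dc_closed[OF s]])
  have "Vshift s \<in> Dc s" unfolding Vshift_shU by (intro Pp_Dc[OF s] Pp.PU Cls_one[OF s])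
  moreover have "Mop s f \<in> Dc s" if "f \<in> CZs s" for f
    unfolding Mop_shU by (intro Pp_Dc[OF s] Pp.PU Cls_Mop[OF s that])
  ultimately show "{Vshift s} \<union> Mop s ` CZs s \<subseteq> Dc s" by blast
qed

lemma fixed_Dc_BV:
  assumes s: "s \<ge> 2" and a: "a \<in> Dc s" and E: "mE a = a"
  shows "a \<in> BV s"
proof -
  have s0: "s > 0" using s by simp
  obtain X where X: "\<forall>k. X k \<in> Pp s" "(\<lambda>k. opnorm (mdiff (X k) a)) \<longlonglongrightarrow> 0" and ab: "a \<in> bop s"
    using a unfolding Dc_def by blast
  have Xb: "X k \<in> bop s" for k using X Pp_bop[OF s0] by auto
  have inB: "mE (X k) \<in> BV s" for k using mE_Pp[OF s0] X BV_eq[OF s] by blast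
  have lim2: "(\<lambda>k. opnorm (mdiff (mE (X k)) a)) \<longlonglongrightarrow> 0"
  proof (rule to0)
    have e: "mdiff (mE (X k)) a = mE (mdiff (X k) a)" for k
    proof -
      have "mdiff (mE (X k)) (mE a) = mE (mdiff (X k) a)" by (simp add: fun_eq_iff mE_def mdiff_def)
      then show ?thesis using E by simp
    qed
    show "0 \<le> opnorm (mdiff (mE (X k)) a)" for k by (intro opnorm_nonneg[of _ s] bop_diff bop_mE Xb ab)
    show "opnorm (mdiff (mE (X k)) a) \<le> opnorm (mdiff (X k) a)" for k
      unfolding e by (intro opnorm_mE[of _ s] bop_diff Xb ab)
    show "(\<lambda>k. opnorm (mdiff (X k) a)) \<longlonglongrightarrow> 0" by (rule X(2))
  qed
  have inB': "mE (X k) \<in> TV s ` CXV s" for k using inB[of k] BV_eq[OF s] by simp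
  have "a \<in> TV s ` CXV s" by (rule cc_lim[OF TVimg_closed[OF s] inB' ab lim2])
  then show ?thesis using BV_eq[OF s] by simp
qed

definition ex :: "real \<Rightarrow> nat \<Rightarrow> complex" where
  "ex \<theta> n = exp (2 * pi * \<i> * of_nat n * of_real \<theta>)"

lemma rho_entry:
  assumes a: "a \<in> bop s"
  shows "rho s \<theta> a v w = (if v \<in> Vset s \<and> w \<in> Vset s then ex \<theta> (fst v) * a v w * ex (-\<theta>) (fst w) else 0)"
proof -
  have m1: "mmult (Ugauge s \<theta>) a v u = (if v \<in> Vset s then ex \<theta> (fst v) * a v u else 0)" for u
  proof -
    have "mmult (Ugauge s \<theta>) a v u = Ugauge s \<theta> v v * a v u"
      unfolding mmult_def by (rule infsum_single) (simp add: Ugauge_def)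
    then show ?thesis by (simp add: Ugauge_def ex_def)
  qed
  have "rho s \<theta> a v w = mmult (Ugauge s \<theta>) a v w * Ugauge s (-\<theta>) w w"
    unfolding rho_def mmult_def[of _ "Ugauge s (-\<theta>)"] by (rule infsum_single) (simp add: Ugauge_def)
  then show ?thesis unfolding m1 using bop_supp2[OF a, of w v] by (auto simp: Ugauge_def ex_def)
qed

lemma ex_inv: "ex \<theta> n * ex (-\<theta>) n = 1"
proof -
  have "ex \<theta> n * ex (-\<theta>) n = exp (2 * pi * \<i> * of_nat n * of_real \<theta> + 2 * pi * \<i> * of_nat n * of_real (-\<theta>))"
    unfolding ex_def by (rule exp_add[symmetric])
  also have "2 * pi * \<i> * of_nat n * of_real \<theta> + 2 * pi * \<i> * of_nat n * of_real (-\<theta>) = 0"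
    by (simp add: algebra_simps)
  finally show ?thesis by simp
qed

lemma ex_half: assumes "n \<noteq> m" shows "ex (1 / (2 * (real n - real m))) n * ex (- (1 / (2 * (real n - real m)))) m = -1"
proof -
  define \<theta> where "\<theta> = 1 / (2 * (real n - real m))"
  have d: "real n - real m \<noteq> 0" using assms by simp
  have "real n * \<theta> - real m * \<theta> = (real n - real m) * \<theta>" by (simp add: algebra_simps)
  also have "\<dots> = 1 / 2" unfolding \<theta>_def using d by (simp add: divide_simps)
  finally have t: "real n * \<theta> - real m * \<theta> = 1 / 2" .
  have "ex \<theta> n * ex (-\<theta>) m = exp (2 * pi * \<i> * of_nat n * of_real \<theta> + 2 * pi * \<i> * of_nat m * of_real (-\<theta>))"
    unfolding ex_def by (rule exp_add[symmetric])
  also have "2 * pi * \<i> * of_nat n * of_real \<theta> + 2 * pi * \<i> * of_nat m * of_real (-\<theta>)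
      = 2 * pi * \<i> * of_real (real n * \<theta> - real m * \<theta>)"
    by (simp add: algebra_simps)
  also have "\<dots> = \<i> * of_real pi" unfolding t by simp
  finally show ?thesis unfolding \<theta>_def by simp
qed

lemma fixed_mE:
  assumes a: "a \<in> bop s" and fx: "\<forall>\<theta>. rho s \<theta> a = a"
  shows "mE a = a"
proof (intro ext)
  fix v w
  show "mE a v w = a v w"
  proof (cases "fst v = fst w")
    case True then show ?thesis by (simp add: mE_def)
  next
    case False
    have "a v w = 0"
    proof (cases "v \<in> Vset s \<and> w \<in> Vset s")
      case True
      define \<theta> where "\<theta> = 1 / (2 * (real (fst v) - real (fst w)))"
      have "a v w = rho s \<theta> a v w" using fx by simp
      also have "\<dots> = ex \<theta> (fst v) * ex (-\<theta>) (fst w) * a v w"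
        using True by (simp add: rho_entry[OF a] mult_ac)
      also have "\<dots> = - a v w" unfolding \<theta>_def using ex_half[OF False] by simp
      finally show ?thesis by simp
    next
      case False then show ?thesis using a by (auto simp: bop_supp1 bop_supp2)
    qed
    then show ?thesis using False by (simp add: mE_def)
  qed
qed

lemma diag_fixed:
  assumes s: "s > 0" and F: "F \<in> CXV s"
  shows "rho s \<theta> (TV s F) = TV s F"
proof (intro ext)
  fix v w
  show "rho s \<theta> (TV s F) v w = TV s F v w"
    unfolding rho_entry[OF TV_bop[OF s F]]
    using ex_inv[of \<theta> "fst v"] by (auto simp: TV_entry[OF s] mult_ac)
qed

lemma Pn_shU: "s > 0 \<Longrightarrow> Pn s n = shU s 0 (\<lambda>v. if v = (n, 0) then 1 else 0)"
  using Vset_0[of s n] by (auto simp: fun_eq_iff Pn_def shU_def)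

lemma chi_CZs: "(\<lambda>a::nat\<Rightarrow>nat. if a \<in> Zs s \<and> a 0 = 0 then 1 else (0::complex)) \<in> CZs s"
proof -
  have "continuous_on (Zs s) (\<lambda>a::nat\<Rightarrow>nat. if a 0 = 0 then 1 else (0::complex))"
    using proj_comp_cont[of "Zs s" "\<lambda>n. if n = 0 then 1 else (0::complex)" 0] by simp
  then have "continuous_on (Zs s) (\<lambda>a::nat\<Rightarrow>nat. if a \<in> Zs s \<and> a 0 = 0 then 1 else (0::complex))"
    by (rule continuous_on_cong[THEN iffD1, OF refl, rotated]) auto
  then show ?thesis by (simp add: CZs_def)
qed

lemma Pn_in:
  assumes s: "s > 0" and A: "cstar_closed s A" and V: "Vshift s \<in> A" and M: "Mop s ` CZs s \<subseteq> A"
  shows "Pn s n \<in> A"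
proof (induction n)
  case 0
  define ch where "ch = (\<lambda>a::nat\<Rightarrow>nat. if a \<in> Zs s \<and> a 0 = 0 then 1 else (0::complex))"
  have Mch: "Mop s ch \<in> A" using M chi_CZs unfolding ch_def by blast
  have VV: "mmult (Vshift s) (madj (Vshift s)) \<in> A" using cc_mult[OF A V cc_adj[OF A V]] .
  have "Pn s 0 = mdiff (Mop s ch) (mmult (Vshift s) (madj (Vshift s)))"
  proof -
    have e: "mmult (Vshift s) (madj (Vshift s)) = shU s 0 (psi s 1 (\<lambda>u. 1))"
      unfolding Vshift_shU adj_shU using P3a[OF s, of 1 1 "\<lambda>v. 1" "\<lambda>v. cnj 1"] by simp
    show ?thesis unfolding e
    proof (intro ext)
      fix v w
      show "Pn s 0 v w = mdiff (Mop s ch) (shU s 0 (psi s 1 (\<lambda>u. 1))) v w"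
      proof (cases "v = w \<and> v \<in> Vset s")
        case True
        have sd: "(sdigits s (snd v) 0 = 0) \<longleftrightarrow> s dvd snd v" using dvd_digits[OF s, of 1 "snd v"] by simp
        have "snd v = 0" if "fst v = 0" using True that by (auto simp: Vset_iff)
        then show ?thesis using True sdigits_Zs[OF s, of "snd v"] sd Vset_0[OF s]
          by (cases v) (auto simp: Pn_def mdiff_def Mop_def shU_def psi_def ch_def)
      next
        case False then show ?thesis by (auto simp: Pn_def mdiff_def Mop_def shU_def psi_def ch_def Vset_0[OF s])
      qed
    qed
  qed
  then show ?case using cc_add[OF A Mch cc_scale[OF A VV]] unfolding mdiff_eq by simp
next
  case (Suc n)
  define \<delta> where "\<delta> m = (\<lambda>v::nat\<times>nat. if v = (m, 0) then 1 else (0::complex))" for m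
  have "mmult (mmult (Vshift s) (Pn s n)) (madj (Vshift s)) = Pn s (Suc n)"
  proof -
    have "mmult (Vshift s) (Pn s n) = shU s 1 (\<lambda>w. 1 * \<delta> n w)"
      unfolding Vshift_shU Pn_shU[OF s] \<delta>_def using P1[OF s, of 1 "\<lambda>v. 1" 0] by simp
    then have "mmult (mmult (Vshift s) (Pn s n)) (madj (Vshift s)) = shU s 0 (psi s 1 (\<lambda>u. (1 * \<delta> n u) * cnj 1))"
      unfolding Vshift_shU adj_shU using P3a[OF s, of 1 1] by simp
    also have "psi s 1 (\<lambda>u. (1 * \<delta> n u) * cnj 1) = \<delta> (Suc n)"
    proof
      fix w
      show "psi s 1 (\<lambda>u. 1 * \<delta> n u * cnj 1) w = \<delta> (Suc n) w"
        by (cases w) (auto simp: psi_def \<delta>_def dn_def dvd_div_eq_0_iff)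
    qed
    finally show ?thesis unfolding Pn_shU[OF s] \<delta>_def .
  qed
  then show ?case using cc_mult[OF A cc_mult[OF A V Suc] cc_adj[OF A V]] by simp
qed

lemma BV_AV: assumes s: "s > 0" shows "BV s \<subseteq> AV s"
proof
  fix b assume b: "b \<in> BV s"
  show "b \<in> AV s" unfolding AV_def
  proof (rule in_cstar_gen)
    fix A assume A: "cstar_closed s A" and G: "{Vshift s} \<union> Mop s ` CZs s \<subseteq> A"
    have "Mop s ` CZs s \<union> range (Pn s) \<subseteq> A" using Pn_in[OF s A] G by blast
    then show "b \<in> A" using cstar_gen_sub[OF A] b unfolding BV_def by blast
  qed
qed

theorem proposition5p3:
  fixes s :: nat
  assumes "s \<ge> 2"
  shows "(\<forall>F\<in>CXV s. (\<lambda>N. opnorm (mdiff (TV s F)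
            (madd (\<lambda>v w. \<Sum>n<N. mscale (snd F n - fst F (sdigits s 0)) (Pn s n) v w)
                  (Mop s (fst F))))) \<longlonglongrightarrow> 0)
    \<and> bij_betw (TV s) (CXV s) (BV s)
    \<and> (\<forall>F\<in>CXV s. \<forall>G\<in>CXV s.
          TV s (\<lambda>a. fst F a + fst G a, \<lambda>n. snd F n + snd G n) = madd (TV s F) (TV s G)
        \<and> TV s (\<lambda>a. fst F a * fst G a, \<lambda>n. snd F n * snd G n) = mmult (TV s F) (TV s G))
    \<and> (\<forall>F\<in>CXV s. \<forall>c. TV s (\<lambda>a. c * fst F a, \<lambda>n. c * snd F n) = mscale c (TV s F))
    \<and> (\<forall>F\<in>CXV s. TV s (\<lambda>a. cnj (fst F a), \<lambda>n. cnj (snd F n)) = madj (TV s F))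
    \<and> BV s = AVinv s"
proof -
  have s: "s \<ge> 2" by (rule assms)
  have s0: "s > 0" using s by simp
  have c1: "\<forall>F\<in>CXV s. (\<lambda>N. opnorm (mdiff (TV s F)
            (madd (\<lambda>v w. \<Sum>n<N. mscale (snd F n - fst F (sdigits s 0)) (Pn s n) v w)
                  (Mop s (fst F))))) \<longlonglongrightarrow> 0"
    using psum_conv[OF s0] unfolding psum_def by blast
  have c2: "bij_betw (TV s) (CXV s) (BV s)"
    unfolding bij_betw_def using TV_inj[OF s] BV_eq[OF s] by simp
  have c3: "\<forall>F\<in>CXV s. \<forall>G\<in>CXV s.
          TV s (\<lambda>a. fst F a + fst G a, \<lambda>n. snd F n + snd G n) = madd (TV s F) (TV s G)
        \<and> TV s (\<lambda>a. fst F a * fst G a, \<lambda>n. snd F n * snd G n) = mmult (TV s F) (TV s G)"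
    using TV_padd[OF s0] TV_pmul[OF s0] unfolding padd_def pmul_def by blast
  have c4: "\<forall>F\<in>CXV s. \<forall>c. TV s (\<lambda>a. c * fst F a, \<lambda>n. c * snd F n) = mscale c (TV s F)"
    using TV_pscale[OF s0] unfolding pscale_def by blast
  have c5: "\<forall>F\<in>CXV s. TV s (\<lambda>a. cnj (fst F a), \<lambda>n. cnj (snd F n)) = madj (TV s F)"
    using TV_pcnj[OF s0] unfolding pcnj_def by blast
  have c6: "BV s = AVinv s"
  proof
    show "BV s \<subseteq> AVinv s"
    proof
      fix b assume b: "b \<in> BV s"
      have "b \<in> AV s" using BV_AV[OF s0] b by blast
      moreover obtain F where "F \<in> CXV s" "b = TV s F" using b BV_eq[OF s] by blast
      then have "\<forall>\<theta>. rho s \<theta> b = b" using diag_fixed[OF s0] by blast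
      ultimately show "b \<in> AVinv s" unfolding AVinv_def by blast
    qed
    show "AVinv s \<subseteq> BV s"
    proof
      fix a assume a: "a \<in> AVinv s"
      then have aD: "a \<in> Dc s" and fx: "\<forall>\<theta>. rho s \<theta> a = a" using AV_Dc[OF s0] unfolding AVinv_def by auto
      have ab: "a \<in> bop s" using aD unfolding Dc_def by blast
      show "a \<in> BV s" by (rule fixed_Dc_BV[OF s aD fixed_mE[OF ab fx]])
    qed
  qed
  show ?thesis using c1 c2 c3 c4 c5 c6 by blast
qed

end
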